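(* Let $K$ be a nonarchimedean field of characteristic $p$ and $L/K$ a nonarchimedean field extension which is perfectly topologically finitely generated, i.e. $L$ has a dense subfield which is the perfection of a finitely generated field extension of $K$. Then $L/K$ factors as $K\subseteq K^{\mathrm{perfd}}_{r_1,\dots,r_l}\subseteq L$ for some polyradius $(r_1,\dots,r_l)$, with $L/K^{\mathrm{perfd}}_{r_1,\dots,r_l}$ semi-immediate.
   Context: $K^{\mathrm{perfd}}_{r_1,\dots,r_l}$ is the completion of $K(x_1^{1/p^\infty},\dots,x_l^{1/p^\infty})$ with respect to the canonical extension of the $(r_1,\dots,r_l)$-Gauss norm. An extension $F\subseteq E$ of valued fields is semi-immediate if $|E^\times|/|F^\times|$ is torsion and the residue field of $E$ is algebraic over that of $F$. *)

theory Defs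
  imports "HOL-Computational_Algebra.Primes" Complex_Main
begin

text \<open>A nonarchimedean field L is modelled as a type 'l of class field with a
real-valued nonarchimedean absolute value v; subfields of L (such as K) are sets.\<close>

definition nonarch_abs :: "('l::field \<Rightarrow> real) \<Rightarrow> bool" where
  "nonarch_abs v \<longleftrightarrow> (\<forall>x. 0 \<le> v x) \<and> (\<forall>x. v x = 0 \<longleftrightarrow> x = 0)
     \<and> (\<forall>x y. v (x * y) = v x * v y) \<and> (\<forall>x y. v (x + y) \<le> max (v x) (v y))"

definition is_subfield :: "'l::field set \<Rightarrow> bool" where
  "is_subfield S \<longleftrightarrow> 0 \<in> S \<and> 1 \<in> S \<and> (\<forall>x\<in>S. \<forall>y\<in>S. x + y \<in> S \<and> x * y \<in> S)
     \<and> (\<forall>x\<in>S. - x \<in> S \<and> inverse x \<in> S)"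

definition gen_subfield :: "'l::field set \<Rightarrow> 'l set" where
  "gen_subfield S = \<Inter> {M. is_subfield M \<and> S \<subseteq> M}"

definition v_cauchy :: "('l::field \<Rightarrow> real) \<Rightarrow> (nat \<Rightarrow> 'l) \<Rightarrow> bool" where
  "v_cauchy v f \<longleftrightarrow> (\<forall>e>0. \<exists>N. \<forall>m\<ge>N. \<forall>n\<ge>N. v (f m - f n) < e)"

definition v_complete :: "('l::field \<Rightarrow> real) \<Rightarrow> 'l set \<Rightarrow> bool" where
  "v_complete v S \<longleftrightarrow> (\<forall>f. (\<forall>n. f n \<in> S) \<and> v_cauchy v f \<longrightarrow>
       (\<exists>y\<in>S. (\<lambda>n. v (f n - y)) \<longlonglongrightarrow> 0))"

definition v_closure :: "('l::field \<Rightarrow> real) \<Rightarrow> 'l set \<Rightarrow> 'l set" where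
  "v_closure v S = {y. \<forall>e>0. \<exists>z\<in>S. v (y - z) < e}"

definition nonarch_field_in :: "('l::field \<Rightarrow> real) \<Rightarrow> 'l set \<Rightarrow> bool" where
  "nonarch_field_in v K \<longleftrightarrow> is_subfield K \<and> v_complete v K \<and> (\<exists>x\<in>K. v x \<noteq> 0 \<and> v x \<noteq> 1)"

text \<open>L (= UNIV) has a dense subfield which is the perfection of a finitely generated
 extension F = K(A) of K.\<close>
definition perf_top_fin_gen :: "nat \<Rightarrow> ('l::field \<Rightarrow> real) \<Rightarrow> 'l set \<Rightarrow> bool" where
  "perf_top_fin_gen p v K \<longleftrightarrow> (\<exists>A. finite A \<and>
     (let F = gen_subfield (K \<union> A); E = {y. \<exists>n. y ^ (p ^ n) \<in> F}
      in (\<forall>y\<in>E. \<exists>z\<in>E. z ^ p = y) \<and> v_closure v E = UNIV))"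

text \<open>Exponents in (Z[1/p]_{>=0})^l, as functions nat => rat vanishing from l on.\<close>
definition admissible_exp :: "nat \<Rightarrow> nat \<Rightarrow> (nat \<Rightarrow> rat) \<Rightarrow> bool" where
  "admissible_exp p l e \<longleftrightarrow> (\<forall>i. 0 \<le> e i) \<and> (\<forall>i\<ge>l. e i = 0)
     \<and> (\<forall>i. \<exists>k::nat. e i * of_nat p ^ k \<in> \<int>)"

definition root_pow :: "nat \<Rightarrow> (nat \<Rightarrow> 'l::field) \<Rightarrow> (nat \<Rightarrow> rat) \<Rightarrow> nat \<Rightarrow> 'l" where
  "root_pow p x e i = (THE y. \<exists>k n::nat. e i = of_nat n / of_nat p ^ k \<and> y ^ (p ^ k) = x i ^ n)"

definition mon :: "nat \<Rightarrow> nat \<Rightarrow> (nat \<Rightarrow> 'l::field) \<Rightarrow> (nat \<Rightarrow> rat) \<Rightarrow> 'l" where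
  "mon p l x e = (\<Prod>i<l. root_pow p x e i)"

definition has_p_roots :: "nat \<Rightarrow> nat \<Rightarrow> (nat \<Rightarrow> 'l::field) \<Rightarrow> bool" where
  "has_p_roots p l x \<longleftrightarrow> (\<forall>i<l. \<forall>k. \<exists>y. y ^ (p ^ k) = x i)"

definition gauss_norm_cond ::
  "nat \<Rightarrow> ('l::field \<Rightarrow> real) \<Rightarrow> 'l set \<Rightarrow> nat \<Rightarrow> (nat \<Rightarrow> real) \<Rightarrow> (nat \<Rightarrow> 'l) \<Rightarrow> bool" where
  "gauss_norm_cond p v K l r x \<longleftrightarrow>
     (\<forall>E c. finite E \<and> E \<noteq> {} \<and> (\<forall>e\<in>E. admissible_exp p l e) \<and> (\<forall>e\<in>E. c e \<in> K) \<longrightarrow>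
        v (\<Sum>e\<in>E. c e * mon p l x e) =
        Max ((\<lambda>e. v (c e) * (\<Prod>i<l. r i powr real_of_rat (e i))) ` E))"

text \<open>M is (the image of an isometric K-embedding of) K^perfd_{r_1,...,r_l} inside L:
 the closure in L of K(x_1^(1/p^oo),...,x_l^(1/p^oo)), where v restricts to the Gauss norm.\<close>
definition is_Kperfd ::
  "nat \<Rightarrow> ('l::field \<Rightarrow> real) \<Rightarrow> 'l set \<Rightarrow> nat \<Rightarrow> (nat \<Rightarrow> real) \<Rightarrow> 'l set \<Rightarrow> bool" where
  "is_Kperfd p v K l r M \<longleftrightarrow> (\<forall>i<l. 0 < r i) \<and>
     (\<exists>x. has_p_roots p l x \<and> gauss_norm_cond p v K l r x \<and>
        M = v_closure v (gen_subfield (K \<union> {mon p l x e | e. admissible_exp p l e})))"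

text \<open>L (= UNIV) is semi-immediate over M: value group quotient torsion and residue
 field extension algebraic (each residue class satisfies a monic polynomial over the
 residue field of M).\<close>
definition semi_immediate :: "('l::field \<Rightarrow> real) \<Rightarrow> 'l set \<Rightarrow> bool" where
  "semi_immediate v M \<longleftrightarrow>
     (\<forall>y. y \<noteq> 0 \<longrightarrow> (\<exists>n>0. \<exists>z\<in>M. z \<noteq> 0 \<and> v y ^ n = v z)) \<and>
     (\<forall>y. v y \<le> 1 \<longrightarrow> (\<exists>n>0. \<exists>a. (\<forall>j<n. a j \<in> M \<and> v (a j) \<le> 1) \<and>
                                   v (y ^ n + (\<Sum>j<n. a j * y ^ j)) < 1))"

end

theory Submission
  imports Defs "HOL-Algebra.Embedded_Algebras"
begin


section \<open>Valuation basics\<close>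

context
  fixes v :: "'l::field \<Rightarrow> real"
  assumes nv: "nonarch_abs v"
begin

lemma va_nonneg: "0 \<le> v x" using nv unfolding nonarch_abs_def by blast
lemma va_zero_iff: "v x = 0 \<longleftrightarrow> x = 0" using nv unfolding nonarch_abs_def by blast
lemma va_mult: "v (x * y) = v x * v y" using nv unfolding nonarch_abs_def by blast
lemma va_add: "v (x + y) \<le> max (v x) (v y)" using nv unfolding nonarch_abs_def by blast
lemma va_0 [simp]: "v 0 = 0" using va_zero_iff by simp
lemma va_pos: "x \<noteq> 0 \<Longrightarrow> 0 < v x" using va_nonneg va_zero_iff by (metis less_eq_real_def)

lemma va_1 [simp]: "v 1 = 1"
proof -
  have "v 1 = v 1 * v 1" using va_mult[of 1 1] by simp
  moreover have "v 1 \<noteq> 0" using va_zero_iff by simp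
  ultimately show ?thesis by (metis mult_cancel_right1)
qed

lemma va_power: "v (x ^ n) = v x ^ n"
  by (induction n) (auto simp: va_mult)

lemma va_minus1: "v (-1) = 1"
proof -
  have "v (-1) * v (-1) = 1" using va_mult[of "-1" "-1"] by simp
  moreover have "v (-1) \<ge> 0" by (rule va_nonneg)
  ultimately show ?thesis by (metis abs_of_nonneg power2_eq_square real_sqrt_abs real_sqrt_one)
qed

lemma va_uminus [simp]: "v (- x) = v x"
  using va_mult[of "-1" x] va_minus1 by simp

lemma va_diff_sym: "v (x - y) = v (y - x)"
  by (metis minus_diff_eq va_uminus)

lemma va_inverse: "v (inverse x) = inverse (v x)"
proof (cases "x = 0")
  case False
  then have "v x * v (inverse x) = 1" using va_mult[of x "inverse x"] by simp
  then show ?thesis by (simp add: field_simps) (metis mult.commute nonzero_eq_divide_eq zero_neq_one mult_zero_left)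
qed simp

lemma va_divide: "v (x / y) = v x / v y"
  by (simp add: divide_inverse va_mult va_inverse)

lemma va_diff: "v (x - y) \<le> max (v x) (v y)"
  using va_add[of x "-y"] by simp

lemma va_add_le: "v x \<le> m \<Longrightarrow> v y \<le> m \<Longrightarrow> v (x + y) \<le> m"
  using va_add[of x y] by linarith

lemma va_add_less: "v x < m \<Longrightarrow> v y < m \<Longrightarrow> v (x + y) < m"
  using va_add[of x y] by linarith

lemma va_add_strict: assumes "v y < v x" shows "v (x + y) = v x"
proof -
  have a: "v (x + y) \<le> v x" using va_add[of x y] assms by linarith
  have "v x \<le> max (v (x + y)) (v y)" using va_add[of "x + y" "- y"] by simp
  then have "v x \<le> v (x + y)" using assms by linarith
  with a show ?thesis by linarith
qed

lemma va_add_strict2: assumes "v y < v x" shows "v (y + x) = v x"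
  using va_add_strict[OF assms] by (simp add: add.commute)

lemma va_sum_le: "(\<And>i. i \<in> I \<Longrightarrow> v (t i) \<le> m) \<Longrightarrow> 0 \<le> m \<Longrightarrow> v (sum t I) \<le> m"
proof (induction I rule: infinite_finite_induct)
  case (insert i I) then show ?case by (simp add: va_add_le)
qed auto

lemma va_sum_less: "(\<And>i. i \<in> I \<Longrightarrow> v (t i) < m) \<Longrightarrow> 0 < m \<Longrightarrow> v (sum t I) < m"
proof (induction I rule: infinite_finite_induct)
  case (insert i I) then show ?case by (simp add: va_add_less)
qed auto

lemma va_sum_dominant:
  assumes "finite I" "i0 \<in> I" "\<And>i. i \<in> I - {i0} \<Longrightarrow> v (t i) < v (t i0)"
  shows "v (sum t I) = v (t i0)"
proof -
  have s: "sum t I = t i0 + sum t (I - {i0})" using assms by (simp add: sum.remove)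
  show ?thesis
  proof (cases "I - {i0} = {}")
    case True then have "sum t (I - {i0}) = 0" by (metis sum.empty)
    then show ?thesis using s by simp
  next
    case False
    then obtain j where "j \<in> I - {i0}" by auto
    then have "0 \<le> v (t j)" "v (t j) < v (t i0)" using assms va_nonneg by auto
    then have "v (sum t (I - {i0})) < v (t i0)" by (intro va_sum_less) (use assms in auto)
    then show ?thesis using s by (simp add: va_add_strict)
  qed
qed

lemma va_sum_distinct:
  assumes "finite I" "I \<noteq> {}"
    and "\<And>i j. i \<in> I \<Longrightarrow> j \<in> I \<Longrightarrow> i \<noteq> j \<Longrightarrow> t i \<noteq> 0 \<Longrightarrow> v (t i) \<noteq> v (t j)"
  shows "v (sum t I) = Max ((\<lambda>i. v (t i)) ` I)"
proof -
  have "Max ((\<lambda>i. v (t i)) ` I) \<in> (\<lambda>i. v (t i)) ` I"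
    using assms by (intro Max_in) auto
  then obtain i0 where i0: "i0 \<in> I" "v (t i0) = Max ((\<lambda>i. v (t i)) ` I)"
    by (metis (no_types, lifting) imageE)
  have ge: "v (t i) \<le> v (t i0)" if "i \<in> I" for i using i0 that assms by auto
  show ?thesis
  proof (cases "t i0 = 0")
    case True
    then have "\<And>i. i \<in> I \<Longrightarrow> t i = 0" using ge va_nonneg va_zero_iff by (metis order_antisym va_0)
    then show ?thesis using i0 True by simp
  next
    case False
    have "v (t i) < v (t i0)" if "i \<in> I - {i0}" for i
      using ge[of i] assms(3)[of i0 i] that False i0 by force
    then show ?thesis using va_sum_dominant[OF assms(1) i0(1)] i0 by simp
  qed
qed

lemma va_diff_small:
  assumes "v (y - z) < v y" shows "v z = v y"
proof -
  have "z = y + (z - y)" by simp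
  then show ?thesis using va_add_strict[of "z - y" y] assms va_diff_sym by (metis)
qed

end

section \<open>Characteristic p\<close>

context
  fixes p :: nat
  assumes pp: "prime p" and cp: "of_nat p = (0::'l::field)"
begin

lemma frob_add: "((x::'l) + y) ^ p = x ^ p + y ^ p"
proof -
  have "(x + y) ^ p = (\<Sum>k\<le>p. of_nat (p choose k) * x ^ k * y ^ (p - k))"
    by (simp add: binomial_ring)
  also have "\<dots> = (\<Sum>k\<in>{0, p}. of_nat (p choose k) * x ^ k * y ^ (p - k))"
  proof (rule sum.mono_neutral_right)
    show "\<forall>k\<in>{..p} - {0, p}. of_nat (p choose k) * x ^ k * y ^ (p - k) = 0"
    proof
      fix k assume k: "k \<in> {..p} - {0, p}"
      then have "p dvd (p choose k)" using pp by (intro dvd_choose_prime) (auto simp: prime_gt_0_nat)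
      then obtain m where "(p choose k) = p * m" by blast
      then have "(of_nat (p choose k) :: 'l) = of_nat p * of_nat m" by simp
      then show "of_nat (p choose k) * x ^ k * y ^ (p - k) = 0" using cp by simp
    qed
  qed auto
  also have "\<dots> = x ^ p + y ^ p" using pp by (auto simp: prime_gt_0_nat)
  finally show ?thesis by (simp add: add.commute)
qed

lemma frobk_add: "((x::'l) + y) ^ (p ^ k) = x ^ (p ^ k) + y ^ (p ^ k)"
proof (induction k)
  case (Suc k)
  have "(x + y) ^ (p ^ Suc k) = ((x + y) ^ (p ^ k)) ^ p" by (simp add: power_mult[symmetric] mult.commute)
  also have "\<dots> = (x ^ (p ^ k)) ^ p + (y ^ (p ^ k)) ^ p" using Suc frob_add by simp
  finally show ?case by (simp add: power_mult[symmetric] mult.commute)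
qed simp

lemma frobk_sum: "(sum (f::_ \<Rightarrow> 'l) I) ^ (p ^ k) = (\<Sum>i\<in>I. f i ^ (p ^ k))"
proof (induction I rule: infinite_finite_induct)
  case (insert i I) then show ?case by (simp add: frobk_add)
next
  case empty then show ?case using pp by (simp add: prime_gt_0_nat)
next
  case (infinite I) then show ?case using pp by (simp add: prime_gt_0_nat)
qed

lemma frobk_minus: "((x::'l) - y) ^ (p ^ k) = x ^ (p ^ k) - y ^ (p ^ k)"
proof -
  have "x ^ (p ^ k) = ((x - y) + y) ^ (p ^ k)" by simp
  also have "\<dots> = (x - y) ^ (p ^ k) + y ^ (p ^ k)" by (rule frobk_add)
  finally show ?thesis by (simp add: algebra_simps)
qed

lemma frobk_inj: "(x::'l) ^ (p ^ k) = y ^ (p ^ k) \<Longrightarrow> x = y"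
  using frobk_minus[of x y k] by simp

end


section \<open>Subfields\<close>

lemma is_subfield_Inter: "(\<And>M. M \<in> S \<Longrightarrow> is_subfield M) \<Longrightarrow> is_subfield (\<Inter> S)"
  unfolding is_subfield_def by auto

lemma is_subfield_UNIV: "is_subfield UNIV" unfolding is_subfield_def by auto

lemma gen_subfield_sub: "is_subfield (gen_subfield S)"
  unfolding gen_subfield_def by (rule is_subfield_Inter) auto

lemma gen_subfield_incl: "S \<subseteq> gen_subfield S"
  unfolding gen_subfield_def by auto

lemma gen_subfield_min: "is_subfield M \<Longrightarrow> S \<subseteq> M \<Longrightarrow> gen_subfield S \<subseteq> M"
  unfolding gen_subfield_def by auto

context fixes S :: "'l::field set" assumes sf: "is_subfield S"
begin
lemma sf_0: "0 \<in> S" using sf unfolding is_subfield_def by auto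
lemma sf_1: "1 \<in> S" using sf unfolding is_subfield_def by auto
lemma sf_add: "x \<in> S \<Longrightarrow> y \<in> S \<Longrightarrow> x + y \<in> S" using sf unfolding is_subfield_def by auto
lemma sf_mult: "x \<in> S \<Longrightarrow> y \<in> S \<Longrightarrow> x * y \<in> S" using sf unfolding is_subfield_def by auto
lemma sf_uminus: "x \<in> S \<Longrightarrow> - x \<in> S" using sf unfolding is_subfield_def by auto
lemma sf_inverse: "x \<in> S \<Longrightarrow> inverse x \<in> S" using sf unfolding is_subfield_def by auto
lemma sf_diff: "x \<in> S \<Longrightarrow> y \<in> S \<Longrightarrow> x - y \<in> S" using sf_add sf_uminus by (metis diff_conv_add_uminus)
lemma sf_divide: "x \<in> S \<Longrightarrow> y \<in> S \<Longrightarrow> x / y \<in> S" using sf_mult sf_inverse by (metis divide_inverse)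
lemma sf_power: "x \<in> S \<Longrightarrow> x ^ n \<in> S" by (induction n) (auto simp: sf_1 sf_mult)
lemma sf_sum: "(\<And>i. i \<in> I \<Longrightarrow> f i \<in> S) \<Longrightarrow> sum f I \<in> S"
  by (induction I rule: infinite_finite_induct) (auto simp: sf_0 sf_add)
lemma sf_prod: "(\<And>i. i \<in> I \<Longrightarrow> f i \<in> S) \<Longrightarrow> prod f I \<in> S"
  by (induction I rule: infinite_finite_induct) (auto simp: sf_1 sf_mult)
end

section \<open>Roots and monomials\<close>

definition GR :: "nat \<Rightarrow> (nat \<Rightarrow> real) \<Rightarrow> (nat \<Rightarrow> rat) \<Rightarrow> real" where
  "GR l r e = (\<Prod>i<l. r i powr real_of_rat (e i))"

definition M0 :: "nat \<Rightarrow> 'l::field set \<Rightarrow> nat \<Rightarrow> (nat \<Rightarrow> 'l) \<Rightarrow> 'l set" where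
  "M0 p K l x = gen_subfield (K \<union> {Defs.mon p l x e | e. admissible_exp p l e})"

definition rho :: "nat \<Rightarrow> 'l::field \<Rightarrow> rat \<Rightarrow> 'l" where
  "rho p f q = root_pow p (\<lambda>_. f) (\<lambda>_. q) 0"

lemma root_pow_rho: "root_pow p x e i = rho p (x i) (e i)"
  unfolding rho_def root_pow_def by simp

lemma mon_cong: "(\<And>i. i < l \<Longrightarrow> x i = x' i \<and> e i = e' i) \<Longrightarrow> Defs.mon p l x e = Defs.mon p l x' e'"
  unfolding Defs.mon_def root_pow_rho by (intro prod.cong) auto

lemma mon_Suc: "Defs.mon p (Suc l) x e = Defs.mon p l x e * root_pow p x e l"
  unfolding Defs.mon_def by simp

lemma GR_cong: "(\<And>i. i < l \<Longrightarrow> r i = r' i \<and> e i = e' i) \<Longrightarrow> GR l r e = GR l r' e'"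
  unfolding GR_def by (intro prod.cong) auto

lemma GR_Suc: "GR (Suc l) r e = GR l r e * r l powr real_of_rat (e l)"
  unfolding GR_def by simp

lemma GR_pos: "(\<And>i. i < l \<Longrightarrow> 0 < r i) \<Longrightarrow> 0 < GR l r e"
  unfolding GR_def by (intro prod_pos) (metis less_irrefl lessThan_iff powr_gt_zero)

lemma adm_rep:
  assumes "admissible_exp p l e" "0 < p"
  shows "\<exists>n k. e i = of_nat n / of_nat p ^ k"
proof -
  obtain k where k: "e i * of_nat p ^ k \<in> \<int>" using assms unfolding admissible_exp_def by blast
  then obtain z where z: "e i * of_nat p ^ k = of_int z" by (auto elim: Ints_cases)
  have "0 \<le> e i" using assms unfolding admissible_exp_def by blast
  then have "0 \<le> e i * of_nat p ^ k" by simp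
  then have "z \<ge> 0" using z by simp
  then have z2: "e i * of_nat p ^ k = of_nat (nat z)" using z by simp
  have "(of_nat p :: rat) ^ k \<noteq> 0" using assms by simp
  then have "e i = of_nat (nat z) / of_nat p ^ k" using z2 by (simp add: field_simps)
  then show ?thesis by blast
qed



context
  fixes p :: nat
  assumes pp: "prime p" and cp: "of_nat p = (0::'l::field)"
begin

lemma p_pos: "0 < p" using pp by (simp add: prime_gt_0_nat)

lemma root_unique:
  fixes y1 y2 f :: 'l
  assumes "y1 ^ (p ^ k1) = f ^ n1" "y2 ^ (p ^ k2) = f ^ n2"
    and "(of_nat n1 / of_nat p ^ k1 :: rat) = of_nat n2 / of_nat p ^ k2"
  shows "y1 = y2"
proof -
  have pk: "(of_nat p :: rat) ^ k \<noteq> 0" for k using p_pos by simp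
  have "(of_nat n1 :: rat) * of_nat p ^ k2 = of_nat n2 * of_nat p ^ k1"
    using assms(3) pk by (simp add: field_simps)
  then have nn: "n1 * p ^ k2 = n2 * p ^ k1"
    by (metis (mono_tags, lifting) of_nat_eq_iff of_nat_mult of_nat_power)
  have "y1 ^ (p ^ (k1 + k2)) = f ^ (n1 * p ^ k2)"
    using assms(1) by (simp add: power_add power_mult)
  also have "\<dots> = f ^ (n2 * p ^ k1)" using nn by simp
  also have "\<dots> = (f ^ n2) ^ (p ^ k1)" by (simp add: power_mult)
  also have "\<dots> = (y2 ^ (p ^ k2)) ^ (p ^ k1)" using assms(2) by simp
  also have "\<dots> = y2 ^ (p ^ (k1 + k2))" by (simp add: power_mult[symmetric] power_add mult.commute)
  finally show ?thesis using frobk_inj[OF pp cp] by blast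
qed

lemma rho_eq:
  fixes f :: 'l
  assumes roots: "\<forall>k. \<exists>y. y ^ (p ^ k) = f"
    and q: "q = of_nat n / of_nat p ^ k"
  shows "rho p f q ^ (p ^ k) = f ^ n"
proof -
  obtain y0 where y0: "y0 ^ (p ^ k) = f" using roots by blast
  let ?P = "\<lambda>y. \<exists>k n::nat. q = of_nat n / of_nat p ^ k \<and> y ^ (p ^ k) = f ^ n"
  have e1: "(y0 ^ n) ^ (p ^ k) = f ^ n"
  proof -
    have "(y0 ^ n) ^ (p ^ k) = y0 ^ (n * p ^ k)" by (simp add: power_mult)
    also have "\<dots> = (y0 ^ (p ^ k)) ^ n" by (simp add: power_mult[symmetric] mult.commute)
    finally show ?thesis using y0 by simp
  qed
  have P0: "?P (y0 ^ n)" using q e1 by blast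
  have uniq: "?P y \<Longrightarrow> y = y0 ^ n" for y
  proof -
    assume "?P y"
    then obtain k' n' where a: "q = of_nat n' / of_nat p ^ k'" "y ^ (p ^ k') = f ^ n'" by blast
    show ?thesis by (rule root_unique[of y k' f n' "y0 ^ n" k n]) (use a e1 q in auto)
  qed
  have "(THE y. ?P y) = y0 ^ n" by (rule the_equality) (use P0 uniq in blast)+
  then have "rho p f q = y0 ^ n" unfolding rho_def root_pow_def by simp
  then show ?thesis using e1 by simp
qed

lemma rho_nat: "rho p (f::'l) (of_nat n) = f ^ n"
proof -
  let ?P = "\<lambda>y. \<exists>k n'::nat. (of_nat n :: rat) = of_nat n' / of_nat p ^ k \<and> y ^ (p ^ k) = f ^ n'"
  have P0: "?P (f ^ n)" by (rule exI[of _ 0], rule exI[of _ n]) simp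
  have uniq: "?P y \<Longrightarrow> y = f ^ n" for y
  proof -
    assume "?P y"
    then obtain k' n' where "of_nat n = (of_nat n' / of_nat p ^ k' :: rat)" "y ^ (p ^ k') = f ^ n'" by blast
    moreover have "(f ^ n) ^ (p ^ 0) = f ^ n" by simp
    ultimately show ?thesis by (intro root_unique[of y k' f n' "f ^ n" 0 n]) auto
  qed
  have "(THE y. ?P y) = f ^ n" by (rule the_equality) (use P0 uniq in blast)+
  then show ?thesis unfolding rho_def root_pow_def by simp
qed

lemma rho_val:
  fixes v :: "'l \<Rightarrow> real" and f :: 'l
  assumes nv: "nonarch_abs v" and roots: "\<forall>k. \<exists>y. y ^ (p ^ k) = f" and f0: "f \<noteq> 0"
    and q: "q = of_nat n / of_nat p ^ k"
  shows "v (rho p f q) = v f powr real_of_rat q"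
proof -
  have vf: "0 < v f" using va_pos[OF nv f0] .
  have a: "v (rho p f q) ^ (p ^ k) = v f ^ n"
  proof -
    have "v (rho p f q) ^ (p ^ k) = v (rho p f q ^ (p ^ k))" by (simp add: va_power[OF nv])
    also have "\<dots> = v (f ^ n)" using rho_eq[OF roots q] by simp
    finally show ?thesis by (simp add: va_power[OF nv])
  qed
  have qr: "real_of_rat q * real (p ^ k) = real n"
  proof -
    have "real_of_rat q = real n / real p ^ k" using q by (simp add: of_rat_divide of_rat_power)
    then show ?thesis using p_pos by simp
  qed
  have b: "(v f powr real_of_rat q) ^ (p ^ k) = v f ^ n"
  proof -
    have "(v f powr real_of_rat q) ^ (p ^ k) = (v f powr real_of_rat q) powr real (p ^ k)"
      using vf by (subst powr_realpow) auto
    also have "\<dots> = v f powr (real_of_rat q * real (p ^ k))" by (simp add: powr_powr)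
    also have "\<dots> = v f powr real n" using qr by simp
    also have "\<dots> = v f ^ n" using vf by (simp add: powr_realpow)
    finally show ?thesis .
  qed
  have "0 \<le> v (rho p f q)" by (rule va_nonneg[OF nv])
  moreover have "0 \<le> v f powr real_of_rat q" by simp
  moreover have "0 < p ^ k" using p_pos by simp
  ultimately show ?thesis using a b by (metis power_eq_imp_eq_base)
qed

end


lemma gauss_flex:
  assumes g: "gauss_norm_cond p v K l r x"
    and I: "finite I" "I \<noteq> {}" and inj: "inj_on \<phi> I"
    and adm: "\<And>i. i \<in> I \<Longrightarrow> admissible_exp p l (\<phi> i)"
    and c: "\<And>i. i \<in> I \<Longrightarrow> c i \<in> K"
  shows "v (\<Sum>i\<in>I. c i * Defs.mon p l x (\<phi> i)) = Max ((\<lambda>i. v (c i) * GR l r (\<phi> i)) ` I)"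
proof -
  define c' where "c' = (\<lambda>e. c (inv_into I \<phi> e))"
  have 1: "(\<Sum>e\<in>\<phi> ` I. c' e * Defs.mon p l x e) = (\<Sum>i\<in>I. c i * Defs.mon p l x (\<phi> i))"
    using inj unfolding c'_def by (simp add: sum.reindex)
  have 2: "(\<lambda>e. v (c' e) * GR l r e) ` (\<phi> ` I) = (\<lambda>i. v (c i) * GR l r (\<phi> i)) ` I"
    using inj unfolding c'_def by (auto simp: image_image)
  have "v (\<Sum>e\<in>\<phi> ` I. c' e * Defs.mon p l x e) = Max ((\<lambda>e. v (c' e) * GR l r e) ` (\<phi> ` I))"
    using g I adm c inj unfolding gauss_norm_cond_def GR_def c'_def
    by (auto simp: inv_into_f_f)
  then show ?thesis using 1 2 by simp
qed


definition core_prop :: "('l::field \<Rightarrow> real) \<Rightarrow> 'l set \<Rightarrow> 'l \<Rightarrow> bool" where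
  "core_prop v S f \<longleftrightarrow> (\<forall>Q c. finite Q \<and> Q \<noteq> {} \<and> (\<forall>n\<in>Q. c n \<in> S) \<longrightarrow>
      v (\<Sum>n\<in>Q. c n * f ^ n) = Max ((\<lambda>n. v (c n) * v f ^ n) ` Q))"

lemma Max_attained:
  assumes "finite Q" "Q \<noteq> {}"
  obtains q0 where "q0 \<in> Q" "h q0 = Max (h ` Q)"
proof -
  have "Max (h ` Q) \<in> h ` Q" using assms by (intro Max_in) auto
  then show ?thesis using that by (metis (no_types, lifting) imageE)
qed

lemma max_pow:
  fixes h :: "'a \<Rightarrow> real"
  assumes "finite Q" "Q \<noteq> {}" "\<And>q. q \<in> Q \<Longrightarrow> 0 \<le> h q"
  shows "Max ((\<lambda>q. h q ^ N) ` Q) = Max (h ` Q) ^ N"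
proof -
  obtain q0 where q0: "q0 \<in> Q" "h q0 = Max (h ` Q)" using Max_attained[OF assms(1,2)] by blast
  show ?thesis
  proof (rule Max_eqI)
    show "finite ((\<lambda>q. h q ^ N) ` Q)" using assms by simp
    show "y \<le> Max (h ` Q) ^ N" if y: "y \<in> (\<lambda>q. h q ^ N) ` Q" for y
    proof -
      obtain q where q: "q \<in> Q" "y = h q ^ N" using y by blast
      have "h q \<le> Max (h ` Q)" using q assms by simp
      then show ?thesis using q assms(3)[of q] by (simp add: power_mono)
    qed
    show "Max (h ` Q) ^ N \<in> (\<lambda>q. h q ^ N) ` Q" using q0 by (metis image_eqI)
  qed
qed

lemma aux_dist:
  fixes v :: "'l::field \<Rightarrow> real"
  assumes nv: "nonarch_abs v" and eq: "v a * v f ^ i = v b * v f ^ j"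
    and a: "a \<noteq> 0" and f: "f \<noteq> 0" and ji: "j < i"
  shows "v f ^ (i - j) = v (b / a)"
proof -
  have i: "v f ^ i = v f ^ j * v f ^ (i - j)" using ji by (simp add: power_add[symmetric])
  have pa: "0 < v a" "0 < v f ^ j" using va_pos[OF nv] a f by auto
  have "(v a * v f ^ (i - j)) * v f ^ j = v b * v f ^ j" using eq i by (simp add: algebra_simps)
  then have "v a * v f ^ (i - j) = v b" using pa(2) by (metis less_irrefl mult_right_cancel)
  then show ?thesis using pa by (simp add: va_divide[OF nv] field_simps)
qed

lemma core_value:
  fixes v :: "'l::field \<Rightarrow> real"
  assumes nv: "nonarch_abs v" and sf: "is_subfield S" and f0: "f \<noteq> 0"
    and hyp: "\<forall>m>0. \<forall>z\<in>S. z \<noteq> 0 \<longrightarrow> v f ^ m \<noteq> v z"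
  shows "core_prop v S f"
  unfolding core_prop_def
proof (intro allI impI)
  fix Q and c :: "nat \<Rightarrow> 'l"
  assume A: "finite Q \<and> Q \<noteq> {} \<and> (\<forall>n\<in>Q. c n \<in> S)"
  have "v (\<Sum>n\<in>Q. c n * f ^ n) = Max ((\<lambda>n. v (c n * f ^ n)) ` Q)"
  proof (rule va_sum_distinct[OF nv])
    show "finite Q" "Q \<noteq> {}" using A by auto
    fix i j assume ij: "i \<in> Q" "j \<in> Q" "i \<noteq> j" "c i * f ^ i \<noteq> 0"
    show "v (c i * f ^ i) \<noteq> v (c j * f ^ j)"
    proof
      assume e: "v (c i * f ^ i) = v (c j * f ^ j)"
      have ci: "c i \<noteq> 0" using ij by auto
      have "0 < v (c i * f ^ i)" using va_pos[OF nv] ij by blast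
      then have cj: "c j \<noteq> 0" using e by (auto simp: va_0[OF nv])
      have e2: "v (c i) * v f ^ i = v (c j) * v f ^ j" using e by (simp add: va_mult[OF nv] va_power[OF nv])
      show False
      proof (cases "j < i")
        case True
        have "v f ^ (i - j) = v (c j / c i)" using aux_dist[OF nv e2 ci f0 True] .
        moreover have "c j / c i \<in> S" "c j / c i \<noteq> 0" using sf_divide[OF sf] A ij ci cj by auto
        ultimately show False using hyp True by (metis zero_less_diff)
      next
        case False
        then have ij2: "i < j" using ij by simp
        have "v f ^ (j - i) = v (c i / c j)" using aux_dist[OF nv e2[symmetric] cj f0 ij2] .
        moreover have "c i / c j \<in> S" "c i / c j \<noteq> 0" using sf_divide[OF sf] A ij ci cj by auto
        ultimately show False using hyp ij2 by (metis zero_less_diff)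
      qed
    qed
  qed
  then show "v (\<Sum>n\<in>Q. c n * f ^ n) = Max ((\<lambda>n. v (c n) * v f ^ n) ` Q)"
    by (simp add: va_mult[OF nv] va_power[OF nv])
qed

lemma core_resid:
  fixes v :: "'l::field \<Rightarrow> real"
  assumes nv: "nonarch_abs v" and sf: "is_subfield S" and vf1: "v f = 1"
    and hyp: "\<forall>n>0. \<forall>a. (\<forall>j<n. a j \<in> S \<and> v (a j) \<le> 1) \<longrightarrow> \<not> v (f ^ n + (\<Sum>j<n. a j * f ^ j)) < 1"
  shows "core_prop v S f"
  unfolding core_prop_def
proof (intro allI impI)
  fix Q and c :: "nat \<Rightarrow> 'l"
  assume A: "finite Q \<and> Q \<noteq> {} \<and> (\<forall>n\<in>Q. c n \<in> S)"
  then have fin: "finite Q" and ne: "Q \<noteq> {}" and cS: "\<And>n. n \<in> Q \<Longrightarrow> c n \<in> S" by auto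
  have vfn: "v (f ^ n) = 1" for n by (simp add: va_power[OF nv] vf1)
  define m where "m = Max ((\<lambda>n. v (c n)) ` Q)"
  have rhs: "Max ((\<lambda>n. v (c n) * v f ^ n) ` Q) = m" unfolding m_def by (simp add: vf1)
  have le_m: "v (c n) \<le> m" if "n \<in> Q" for n unfolding m_def using fin that by simp
  obtain n0 where n0: "n0 \<in> Q" "v (c n0) = m" using Max_attained[OF fin ne, of "\<lambda>n. v (c n)"] m_def by metis
  show "v (\<Sum>n\<in>Q. c n * f ^ n) = Max ((\<lambda>n. v (c n) * v f ^ n) ` Q)"
  proof (cases "m = 0")
    case True
    then have "c n = 0" if "n \<in> Q" for n using le_m[OF that] va_nonneg[OF nv, of "c n"] va_zero_iff[OF nv] by force
    then show ?thesis using rhs True by (simp add: va_0[OF nv])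
  next
    case False
    then have mpos: "0 < m" using n0 va_nonneg[OF nv, of "c n0"] by simp
    define QN where "QN = {n \<in> Q. v (c n) = m}"
    have QNfin: "finite QN" "QN \<noteq> {}" using fin n0 unfolding QN_def by auto
    define N where "N = Max QN"
    have N: "N \<in> Q" "v (c N) = m" using Max_in[OF QNfin] unfolding N_def QN_def by auto
    have cN: "c N \<noteq> 0" using N mpos by (auto simp: va_0[OF nv])
    have Nmax: "n \<le> N" if "n \<in> Q" "v (c n) = m" for n
      using that QNfin unfolding N_def QN_def by simp
    define a where "a = (\<lambda>j. if j \<in> Q then c j / c N else 0)"
    define P where "P = f ^ N + (\<Sum>j<N. a j * f ^ j)"
    have aS: "a j \<in> S \<and> v (a j) \<le> 1" for j
    proof (cases "j \<in> Q")
      case True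
      then have "v (c j) \<le> v (c N)" using le_m N by simp
      then have "v (c j / c N) \<le> 1" using cN va_pos[OF nv cN] by (simp add: va_divide[OF nv])
      then show ?thesis unfolding a_def using True sf_divide[OF sf] cS N by auto
    qed (simp add: a_def sf_0[OF sf] va_0[OF nv])
    have vP_le: "v P \<le> 1" unfolding P_def
      by (intro va_add_le[OF nv] va_sum_le[OF nv]) (auto simp: vfn va_mult[OF nv] aS)
    have vP: "v P = 1"
    proof (cases "N = 0")
      case True then show ?thesis unfolding P_def by (simp add: va_1[OF nv])
    next
      case False
      then have "\<not> v P < 1" using hyp aS unfolding P_def by blast
      then show ?thesis using vP_le by simp
    qed
    have split: "(\<Sum>n\<in>Q. c n * f ^ n) = c N * P + (\<Sum>n\<in>Q - {..N}. c n * f ^ n)"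
    proof -
      have "(\<Sum>n\<in>Q. c n * f ^ n) = (\<Sum>n\<in>Q \<inter> {..N}. c n * f ^ n) + (\<Sum>n\<in>Q - {..N}. c n * f ^ n)"
        using fin by (metis sum.Int_Diff)
      moreover have "(\<Sum>n\<in>Q \<inter> {..N}. c n * f ^ n) = c N * P"
      proof -
        have "(\<Sum>n\<in>Q \<inter> {..N}. c n * f ^ n) = (\<Sum>n\<in>{..N} \<inter> Q. c n * f ^ n)" by (simp add: Int_commute)
        also have "\<dots> = (\<Sum>n\<in>{..N}. if n \<in> Q then c n * f ^ n else 0)"
          by (rule sum.inter_restrict) simp
        also have "\<dots> = (\<Sum>n\<in>{..<Suc N}. if n \<in> Q then c n * f ^ n else 0)"
          by (simp add: lessThan_Suc_atMost)
        also have "\<dots> = (\<Sum>n<N. if n \<in> Q then c n * f ^ n else 0) + c N * f ^ N"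
          using N by simp
        also have "(\<Sum>n<N. if n \<in> Q then c n * f ^ n else 0) = (\<Sum>j<N. c N * (a j * f ^ j))"
          using cN by (intro sum.cong) (auto simp: a_def)
        also have "\<dots> = c N * (\<Sum>j<N. a j * f ^ j)" by (simp add: sum_distrib_left)
        finally show ?thesis unfolding P_def by (simp add: algebra_simps)
      qed
      ultimately show ?thesis by simp
    qed
    have v1: "v (c N * P) = m" using N vP by (simp add: va_mult[OF nv])
    have v2: "v (\<Sum>n\<in>Q - {..N}. c n * f ^ n) < m"
    proof (rule va_sum_less[OF nv _ mpos])
      fix n assume n: "n \<in> Q - {..N}"
      then have "v (c n) \<noteq> m" using Nmax by force
      then have "v (c n) < m" using le_m n by force
      then show "v (c n * f ^ n) < m" by (simp add: va_mult[OF nv] vfn)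
    qed
    have "v (\<Sum>n\<in>Q. c n * f ^ n) = m" using split v1 v2 va_add_strict[OF nv] by simp
    then show ?thesis using rhs by simp
  qed
qed


lemma common_denom:
  assumes "finite Q" "\<forall>q\<in>Q. \<exists>k. q * of_nat p ^ k \<in> (\<int> :: rat set)"
  shows "\<exists>K0. \<forall>q\<in>Q. q * of_nat p ^ K0 \<in> (\<int> :: rat set)"
proof -
  obtain kq where kq: "\<forall>q\<in>Q. q * of_nat p ^ kq q \<in> (\<int> :: rat set)" using assms(2) by metis
  define K0 where "K0 = (\<Sum>q\<in>Q. kq q)"
  have "q * of_nat p ^ K0 \<in> (\<int> :: rat set)" if q: "q \<in> Q" for q
  proof -
    have "kq q \<le> K0" unfolding K0_def using assms(1) q by (intro member_le_sum) auto
    then have "q * of_nat p ^ K0 = (q * of_nat p ^ kq q) * of_nat p ^ (K0 - kq q)"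
      by (simp add: power_add[symmetric])
    moreover have "(of_nat p :: rat) ^ (K0 - kq q) \<in> \<int>" by simp
    ultimately show ?thesis using kq q by (metis Ints_mult)
  qed
  then show ?thesis by blast
qed

lemma int_nat_rep:
  assumes "(q :: rat) * of_nat p ^ K0 \<in> \<int>" "0 \<le> q" "0 < p"
  shows "\<exists>n. q = of_nat n / of_nat p ^ K0"
proof -
  obtain z where z: "q * of_nat p ^ K0 = of_int z" using assms(1) by (auto elim: Ints_cases)
  have "0 \<le> q * of_nat p ^ K0" using assms by simp
  then have "z \<ge> 0" using z by simp
  then have z2: "q * of_nat p ^ K0 = of_nat (nat z)" using z by simp
  have "(of_nat p :: rat) ^ K0 \<noteq> 0" using assms by simp
  then have "q = of_nat (nat z) / of_nat p ^ K0" using z2 by (simp add: field_simps)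
  then show ?thesis by blast
qed

lemma ratcore:
  fixes v :: "'l::field \<Rightarrow> real" and f :: 'l and p :: nat
  assumes pp: "prime p" and cp: "of_nat p = (0::'l)" and nv: "nonarch_abs v"
    and sf: "is_subfield S" and core: "core_prop v S f" and f0: "f \<noteq> 0"
    and roots: "\<forall>k. \<exists>y. y ^ (p ^ k) = f"
    and Q: "finite Q" "Q \<noteq> {}" "\<forall>q\<in>Q. 0 \<le> q \<and> (\<exists>k. q * of_nat p ^ k \<in> \<int>)"
    and g: "\<forall>q\<in>Q. g q \<in> S"
  shows "v (\<Sum>q\<in>Q. g q * rho p f q) = Max ((\<lambda>q. v (g q) * v f powr real_of_rat q) ` Q)"
proof -
  have p0: "0 < p" using pp by (simp add: prime_gt_0_nat)
  obtain K0 where K0: "\<forall>q\<in>Q. q * of_nat p ^ K0 \<in> (\<int> :: rat set)"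
    using common_denom[OF Q(1)] Q(3) by blast
  define nq where "nq = (\<lambda>q. SOME n. q = of_nat n / (of_nat p ^ K0 :: rat))"
  have nq: "q = of_nat (nq q) / of_nat p ^ K0" if "q \<in> Q" for q
  proof -
    have "\<exists>n. q = of_nat n / of_nat p ^ K0" using int_nat_rep[of q p K0] K0 Q(3) that p0 by blast
    then show ?thesis unfolding nq_def by (rule someI_ex)
  qed
  have inj: "inj_on nq Q" by (rule inj_onI) (metis nq)
  define N where "N = p ^ K0"
  have N0: "0 < N" unfolding N_def using p0 by simp
  have rN: "rho p f q ^ N = f ^ (nq q)" if "q \<in> Q" for q
    unfolding N_def by (rule rho_eq[OF pp cp roots nq[OF that]])
  define h where "h = (\<lambda>q. v (g q) * v f powr real_of_rat q)"
  have hN: "h q ^ N = v (g q) ^ N * v f ^ (nq q)" if "q \<in> Q" for q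
  proof -
    have "v f powr real_of_rat q = v (rho p f q)" using rho_val[OF pp cp nv roots f0 nq[OF that]] by simp
    then have "(v f powr real_of_rat q) ^ N = v (rho p f q ^ N)" by (simp add: va_power[OF nv])
    also have "\<dots> = v f ^ (nq q)" using rN[OF that] by (simp add: va_power[OF nv])
    finally show ?thesis unfolding h_def by (simp add: power_mult_distrib)
  qed
  define c where "c = (\<lambda>n. g (inv_into Q nq n) ^ N)"
  have "v (\<Sum>q\<in>Q. g q * rho p f q) ^ N = v ((\<Sum>q\<in>Q. g q * rho p f q) ^ N)"
    by (simp add: va_power[OF nv])
  also have "(\<Sum>q\<in>Q. g q * rho p f q) ^ N = (\<Sum>q\<in>Q. g q ^ N * f ^ (nq q))"
    unfolding N_def frobk_sum[OF pp cp] using rN unfolding N_def by (simp add: power_mult_distrib)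
  also have "\<dots> = (\<Sum>n\<in>nq ` Q. c n * f ^ n)"
    using inj unfolding c_def by (simp add: sum.reindex)
  also have "v \<dots> = Max ((\<lambda>n. v (c n) * v f ^ n) ` (nq ` Q))"
    using core Q inj unfolding core_prop_def
    by (auto simp: c_def g sf_power[OF sf] inv_into_into)
  also have "(\<lambda>n. v (c n) * v f ^ n) ` (nq ` Q) = (\<lambda>q. h q ^ N) ` Q"
    using inj hN by (force simp: image_image c_def va_power[OF nv])
  also have "Max \<dots> = Max (h ` Q) ^ N"
    using Q by (intro max_pow) (auto simp: h_def va_nonneg[OF nv])
  finally have "v (\<Sum>q\<in>Q. g q * rho p f q) ^ N = Max (h ` Q) ^ N" .
  moreover have "0 \<le> Max (h ` Q)"
  proof -
    obtain q0 where "q0 \<in> Q" using Q by blast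
    then have "h q0 \<le> Max (h ` Q)" using Q by simp
    moreover have "0 \<le> h q0" by (simp add: h_def va_nonneg[OF nv])
    ultimately show ?thesis by linarith
  qed
  ultimately have "v (\<Sum>q\<in>Q. g q * rho p f q) = Max (h ` Q)"
    using N0 va_nonneg[OF nv] by (metis power_eq_imp_eq_base)
  then show ?thesis unfolding h_def .
qed


lemma max_group:
  fixes a :: "'e \<Rightarrow> real" and b :: "'q \<Rightarrow> real"
  assumes E: "finite E" "E \<noteq> {}" and b: "\<And>e. e \<in> E \<Longrightarrow> 0 \<le> b (h e)"
  shows "Max ((\<lambda>q. Max (a ` {e\<in>E. h e = q}) * b q) ` (h ` E)) = Max ((\<lambda>e. a e * b (h e)) ` E)"
proof -
  define m where "m = Max ((\<lambda>e. a e * b (h e)) ` E)"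
  have le_m: "a e * b (h e) \<le> m" if "e \<in> E" for e unfolding m_def
    by (rule Max_ge) (use E that in auto)
  have up: "Max (a ` {e\<in>E. h e = q}) * b q \<le> m" if q: "q \<in> h ` E" for q
  proof -
    have fq: "finite {e\<in>E. h e = q}" "{e\<in>E. h e = q} \<noteq> {}" using E q by auto
    obtain e0 where e0: "e0 \<in> {e\<in>E. h e = q}" "a e0 = Max (a ` {e\<in>E. h e = q})"
      using Max_attained[OF fq, of a] by blast
    have "e0 \<in> E" "h e0 = q" using e0(1) by auto
    then show ?thesis using le_m[of e0] e0(2) by simp
  qed
  define T where "T = (\<lambda>q. Max (a ` {e\<in>E. h e = q}) * b q) ` (h ` E)"
  have "Max T = m"
  proof (rule Max_eqI)
    show "finite T" using E unfolding T_def by simp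
    show "y \<le> m" if "y \<in> T" for y
    proof -
      from that obtain q where "q \<in> h ` E" "y = Max (a ` {e\<in>E. h e = q}) * b q" unfolding T_def by blast
      then show ?thesis using up by simp
    qed
    obtain e1 where e1: "e1 \<in> E" "a e1 * b (h e1) = m"
      using Max_attained[OF E, of "\<lambda>e. a e * b (h e)"] unfolding m_def by blast
    let ?q = "h e1"
    have fq: "finite {e\<in>E. h e = ?q}" using E by simp
    have "a e1 \<le> Max (a ` {e\<in>E. h e = ?q})" by (rule Max_ge) (use fq e1 in auto)
    then have "a e1 * b ?q \<le> Max (a ` {e\<in>E. h e = ?q}) * b ?q"
      using b[OF e1(1)] by (rule mult_right_mono)
    moreover have qE: "?q \<in> h ` E" using e1 by blast
    moreover have "Max (a ` {e\<in>E. h e = ?q}) * b ?q \<le> m" using up[OF qE] .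
    ultimately have mq: "Max (a ` {e\<in>E. h e = ?q}) * b ?q = m" using e1(2) by (simp only: order_antisym)
    show "m \<in> T" unfolding T_def
      by (rule image_eqI[where x = "?q" and f = "\<lambda>q. Max (a ` {e\<in>E. h e = q}) * b q", OF mq[symmetric] qE])
  qed
  then show ?thesis unfolding T_def m_def .
qed

lemma adm_restrict:
  assumes "admissible_exp p (Suc l) e"
  shows "admissible_exp p l (e(l := 0))"
proof -
  have nn: "\<And>i. 0 \<le> e i" and zz: "\<And>i. Suc l \<le> i \<Longrightarrow> e i = 0"
    and ii: "\<And>i. \<exists>k. e i * of_nat p ^ k \<in> \<int>"
    using assms unfolding admissible_exp_def by blast+
  have 1: "0 \<le> (e(l := 0)) i" for i by (cases "i = l") (simp_all add: nn)
  have 2: "(e(l := 0)) i = 0" if "l \<le> i" for i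
  proof (cases "i = l")
    case False then have "Suc l \<le> i" using that by simp
    then show ?thesis using zz False by simp
  qed simp
  have 3: "\<exists>k. (e(l := 0)) i * of_nat p ^ k \<in> \<int>" for i
  proof (cases "i = l")
    case True
    then have "(e(l := 0)) i * of_nat p ^ 0 \<in> \<int>" by simp
    then show ?thesis by blast
  next
    case False then show ?thesis using ii[of i] by simp
  qed
  show ?thesis unfolding admissible_exp_def using 1 2 3 by blast
qed

lemma adm_last:
  assumes "admissible_exp p l' e"
  shows "0 \<le> e i \<and> (\<exists>k. e i * of_nat p ^ k \<in> \<int>)"
  using assms unfolding admissible_exp_def by blast

lemma M0_sub: "is_subfield (M0 p K l x)"
  unfolding M0_def by (rule gen_subfield_sub)

lemma M0_K: "K \<subseteq> M0 p K l x"
  unfolding M0_def by (rule subset_trans[OF Un_upper1 gen_subfield_incl])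

lemma M0_mon: assumes "admissible_exp p l e" shows "Defs.mon p l x e \<in> M0 p K l x"
proof -
  have "Defs.mon p l x e \<in> K \<union> {Defs.mon p l x e | e. admissible_exp p l e}" using assms by blast
  then show ?thesis unfolding M0_def by (rule subsetD[OF gen_subfield_incl])
qed

lemma gauss_extend:
  fixes v :: "'l::field \<Rightarrow> real" and f :: 'l and p :: nat
  assumes pp: "prime p" and cp: "of_nat p = (0::'l)" and nv: "nonarch_abs v"
    and g: "gauss_norm_cond p v K l r x"
    and f0: "f \<noteq> 0" and roots: "\<forall>k. \<exists>y. y ^ (p ^ k) = f"
    and core: "core_prop v (M0 p K l x) f"
  shows "gauss_norm_cond p v K (Suc l) (r(l := v f)) (x(l := f))"
  unfolding gauss_norm_cond_def
proof (intro allI impI)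
  fix E and c :: "(nat \<Rightarrow> rat) \<Rightarrow> 'l"
  assume A: "finite E \<and> E \<noteq> {} \<and> (\<forall>e\<in>E. admissible_exp p (Suc l) e) \<and> (\<forall>e\<in>E. c e \<in> K)"
  then have E: "finite E" "E \<noteq> {}" and adm: "\<And>e. e \<in> E \<Longrightarrow> admissible_exp p (Suc l) e"
    and cK: "\<And>e. e \<in> E \<Longrightarrow> c e \<in> K" by auto
  let ?S = "M0 p K l x"
  have sf: "is_subfield ?S" by (rule M0_sub)
  define \<phi> where "\<phi> = (\<lambda>e::nat \<Rightarrow> rat. e(l := 0))"
  have mon_split: "Defs.mon p (Suc l) (x(l := f)) e = Defs.mon p l x (\<phi> e) * rho p f (e l)" for e
  proof -
    have "Defs.mon p l (x(l := f)) e = Defs.mon p l x (\<phi> e)" unfolding \<phi>_def by (intro mon_cong) auto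
    then show ?thesis by (simp add: mon_Suc root_pow_rho)
  qed
  have GR_split: "GR (Suc l) (r(l := v f)) e = GR l r (\<phi> e) * v f powr real_of_rat (e l)" for e
  proof -
    have "GR l (r(l := v f)) e = GR l r (\<phi> e)" unfolding \<phi>_def by (intro GR_cong) auto
    then show ?thesis by (simp add: GR_Suc)
  qed
  define Q where "Q = (\<lambda>e. e l) ` E"
  define Eq where "Eq = (\<lambda>q. {e\<in>E. e l = q})"
  define G where "G = (\<lambda>q. \<Sum>e\<in>Eq q. c e * Defs.mon p l x (\<phi> e))"
  have sum_eq: "(\<Sum>e\<in>E. c e * Defs.mon p (Suc l) (x(l := f)) e) = (\<Sum>q\<in>Q. G q * rho p f q)"
  proof -
    have "(\<Sum>e\<in>E. c e * Defs.mon p (Suc l) (x(l := f)) e) = (\<Sum>e\<in>E. (c e * Defs.mon p l x (\<phi> e)) * rho p f (e l))"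
      by (simp add: mon_split mult.assoc)
    also have "\<dots> = (\<Sum>q\<in>Q. \<Sum>e\<in>Eq q. (c e * Defs.mon p l x (\<phi> e)) * rho p f (e l))"
      unfolding Q_def Eq_def using E by (intro sum.group[symmetric]) auto
    also have "\<dots> = (\<Sum>q\<in>Q. \<Sum>e\<in>Eq q. (c e * Defs.mon p l x (\<phi> e)) * rho p f q)"
      unfolding Eq_def by (intro sum.cong refl) auto
    also have "\<dots> = (\<Sum>q\<in>Q. G q * rho p f q)" unfolding G_def by (simp add: sum_distrib_right)
    finally show ?thesis .
  qed
  have GS: "\<forall>q\<in>Q. G q \<in> ?S"
  proof
    fix q assume "q \<in> Q"
    show "G q \<in> ?S" unfolding G_def
    proof (rule sf_sum[OF sf])
      fix e assume "e \<in> Eq q"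
      then have eE: "e \<in> E" unfolding Eq_def by blast
      show "c e * Defs.mon p l x (\<phi> e) \<in> ?S" unfolding \<phi>_def
        by (rule sf_mult[OF sf subsetD[OF M0_K cK[OF eE]] M0_mon[OF adm_restrict[OF adm[OF eE]]]])
    qed
  qed
  have Qfin: "finite Q" "Q \<noteq> {}" using E unfolding Q_def by auto
  have Qprop: "\<forall>q\<in>Q. 0 \<le> q \<and> (\<exists>k. q * of_nat p ^ k \<in> \<int>)"
    unfolding Q_def using adm adm_last by blast
  have "v (\<Sum>q\<in>Q. G q * rho p f q) = Max ((\<lambda>q. v (G q) * v f powr real_of_rat q) ` Q)"
    by (rule ratcore[OF pp cp nv sf core f0 roots Qfin Qprop GS])
  also have "(\<lambda>q. v (G q) * v f powr real_of_rat q) ` Q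
      = (\<lambda>q. Max ((\<lambda>e. v (c e) * GR l r (\<phi> e)) ` Eq q) * v f powr real_of_rat q) ` Q"
  proof (intro image_cong refl)
    fix q assume q: "q \<in> Q"
    have "v (G q) = Max ((\<lambda>e. v (c e) * GR l r (\<phi> e)) ` Eq q)"
      unfolding G_def
    proof (rule gauss_flex[OF g])
      show "finite (Eq q)" "Eq q \<noteq> {}" using E q unfolding Eq_def Q_def by auto
      show "inj_on \<phi> (Eq q)"
      proof (rule inj_onI)
        fix e1 e2 assume "e1 \<in> Eq q" "e2 \<in> Eq q" "\<phi> e1 = \<phi> e2"
        then have el: "e1 l = e2 l" and eq0: "e1(l := 0) = e2(l := 0)" unfolding Eq_def \<phi>_def by auto
        show "e1 = e2"
        proof (rule ext)
          fix i show "e1 i = e2 i" using el fun_cong[OF eq0, of i] by (cases "i = l") auto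
        qed
      qed
      show "admissible_exp p l (\<phi> e)" if "e \<in> Eq q" for e
        using that adm adm_restrict unfolding Eq_def \<phi>_def by blast
      show "c e \<in> K" if "e \<in> Eq q" for e using that cK unfolding Eq_def by blast
    qed
    then show "v (G q) * v f powr real_of_rat q = Max ((\<lambda>e. v (c e) * GR l r (\<phi> e)) ` Eq q) * v f powr real_of_rat q"
      by simp
  qed
  also have "Max \<dots> = Max ((\<lambda>e. v (c e) * GR l r (\<phi> e) * v f powr real_of_rat (e l)) ` E)"
    unfolding Q_def Eq_def
    by (rule max_group[OF E, of "\<lambda>q. v f powr real_of_rat q" "\<lambda>e. e l" "\<lambda>e. v (c e) * GR l r (\<phi> e)"]) simp
  also have "\<dots> = Max ((\<lambda>e. v (c e) * GR (Suc l) (r(l := v f)) e) ` E)"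
    by (simp add: GR_split mult.assoc)
  finally show "v (\<Sum>e\<in>E. c e * Defs.mon p (Suc l) (x(l := f)) e) =
        Max ((\<lambda>e. v (c e) * (\<Prod>i<Suc l. (r(l := v f)) i powr real_of_rat (e i))) ` E)"
    using sum_eq unfolding GR_def by simp
qed

lemma gauss_zero:
  fixes v :: "'l::field \<Rightarrow> real"
  assumes nv: "nonarch_abs v"
  shows "gauss_norm_cond p v K 0 r x"
  unfolding gauss_norm_cond_def
proof (intro allI impI)
  fix E and c :: "(nat \<Rightarrow> rat) \<Rightarrow> 'l"
  assume A: "finite E \<and> E \<noteq> {} \<and> (\<forall>e\<in>E. admissible_exp p 0 e) \<and> (\<forall>e\<in>E. c e \<in> K)"
  have "e = (\<lambda>_. 0)" if "e \<in> E" for e using A that unfolding admissible_exp_def by auto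
  then have "E = {\<lambda>_. 0}" using A by blast
  then show "v (\<Sum>e\<in>E. c e * Defs.mon p 0 x e) = Max ((\<lambda>e. v (c e) * (\<Prod>i<0. r i powr real_of_rat (e i))) ` E)"
    by (simp add: Defs.mon_def)
qed


definition FR :: "'a::field ring" where
  "FR = \<lparr>carrier = UNIV, monoid.mult = (\<lambda>x y. x * y), one = 1, ring.zero = 0, add = (\<lambda>x y. x + y)\<rparr>"

lemma FR_simps [simp]:
  "carrier FR = UNIV" "monoid.mult FR x y = x * y" "one FR = 1" "ring.zero FR = 0" "add FR x y = x + y"
  by (simp_all add: FR_def)

lemma field_FR: "field (FR :: 'a::field ring)"
proof -
  have "\<exists>y. x + y = 0" for x :: 'a
    using add.right_inverse by blast
  moreover have "x \<noteq> 0 \<Longrightarrow> \<exists>y. x * y = 1" for x :: 'a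
    by (rule exI[of _ "inverse x"]) auto
  ultimately show ?thesis
    unfolding FR_def using add.right_inverse
    by unfold_locales (auto simp: algebra_simps Units_def)
qed

lemma ring_FR: "ring (FR :: 'a::field ring)"
proof -
  interpret F: field "FR :: 'a ring" by (rule field_FR)
  show ?thesis by (rule F.ring_axioms)
qed

lemma FR_minus: "a_inv FR (x :: 'a::field) = - x"
proof -
  interpret F: field "FR :: 'a ring" by (rule field_FR)
  show ?thesis by (rule F.minus_equality) simp_all
qed

lemma FR_inv: "(x :: 'a::field) \<noteq> 0 \<Longrightarrow> m_inv FR x = inverse x"
proof -
  interpret F: field "FR :: 'a ring" by (rule field_FR)
  assume "x \<noteq> 0"
  then show ?thesis by (intro F.inv_char) simp_all
qed

lemma subfield_FR:
  assumes "is_subfield (K :: 'a::field set)"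
  shows "subfield K FR"
proof -
  interpret F: field "FR :: 'a ring" by (rule field_FR)
  have "subring K FR"
    by (rule F.subringI) (use assms in \<open>auto simp: FR_minus sf_1 sf_uminus sf_mult sf_add\<close>)
  then show ?thesis
    by (rule F.subfieldI') (use assms in \<open>auto simp: FR_inv sf_inverse\<close>)
qed

lemma combine_FR:
  "ring.combine FR Ks (Us :: 'a::field list) = (\<Sum>i<min (length Ks) (length Us). Ks ! i * Us ! i)"
proof -
  interpret F: ring "FR :: 'a ring" by (rule ring_FR)
  show ?thesis
  proof (induction Ks arbitrary: Us)
    case Nil then show ?case by simp
  next
    case (Cons k Ks)
    show ?case
    proof (cases Us)
      case Nil then show ?thesis by simp
    next
      case (Cons u Us')
      have "min (length (k # Ks)) (length Us) = Suc (min (length Ks) (length Us'))" using Cons by simp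
      then show ?thesis using Cons.IH[of Us'] Cons by (simp del: sum.lessThan_Suc add: sum.lessThan_Suc_shift)
    qed
  qed
qed

lemma (in ring) filter_base_len:
  assumes K: "subfield K R" and "set Us \<subseteq> carrier R"
  shows "\<exists>Vs. independent K Vs \<and> Span K Vs = Span K Us \<and> length Vs \<le> length Us"
  using assms(2)
proof (induction Us)
  case Nil thus ?case by auto
next
  case (Cons u Us)
  then obtain Vs where Vs: "independent K Vs" "Span K Vs = Span K Us" "length Vs \<le> length Us"
    by auto
  show ?case
  proof (cases "u \<in> Span K Us")
    case True
    hence "Span K (u # Us) = Span K Us"
      using Span_base_incl[OF K] mono_Span_subset[OF K]
      by (metis Cons.prems insert_subset list.simps(15) subset_antisym)
    thus ?thesis
      using Vs by (metis le_SucI length_Cons)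
  next
    case False
    hence "Span K (u # Vs) = Span K (u # Us)" and "independent K (u # Vs)"
      using li_Cons[of u K Vs] Cons(2) Vs by auto
    thus ?thesis
      using Vs by (metis Suc_le_mono length_Cons)
  qed
qed

lemma lin_bound:
  fixes K :: "'a::field set" and u :: "nat \<Rightarrow> 'a"
  assumes sK: "is_subfield K"
    and indep: "\<And>c. (\<forall>i<n. c i \<in> K) \<Longrightarrow> (\<Sum>i<n. c i * u i) = 0 \<Longrightarrow> \<forall>i<n. c i = 0"
    and inspan: "\<forall>i<n. u i \<in> ring.Span FR K ws"
  shows "n \<le> length ws"
proof -
  interpret F: field "FR :: 'a ring" by (rule field_FR)
  have K: "subfield K FR" by (rule subfield_FR[OF sK])
  define Us where "Us = map u [0..<n]"
  have lUs: "length Us = n" unfolding Us_def by simp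
  have Usi: "Us ! i = u i" if "i < n" for i unfolding Us_def using that by simp
  have indUs: "F.independent K Us"
  proof (rule F.trivial_combine_imp_independent[OF K])
    show "set Us \<subseteq> carrier FR" by simp
    fix Ks assume Ks: "set Ks \<subseteq> K" and comb: "F.combine Ks Us = \<zero>\<^bsub>FR\<^esub>"
    define c where "c = (\<lambda>i. if i < length Ks then Ks ! i else 0)"
    have cK: "\<forall>i<n. c i \<in> K" unfolding c_def using Ks sf_0[OF sK] by auto
    have "(\<Sum>i<n. c i * u i) = (\<Sum>i<min (length Ks) (length Us). Ks ! i * Us ! i)"
    proof -
      have "(\<Sum>i<n. c i * u i) = (\<Sum>i\<in>{..<min (length Ks) n}. c i * u i)"
        by (rule sum.mono_neutral_right) (auto simp: c_def)
      also have "\<dots> = (\<Sum>i<min (length Ks) (length Us). Ks ! i * Us ! i)"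
        using lUs Usi by (intro sum.cong) (auto simp: c_def)
      finally show ?thesis .
    qed
    also have "\<dots> = F.combine Ks Us" by (rule combine_FR[symmetric])
    also have "\<dots> = 0" using comb by simp
    finally have "\<forall>i<n. c i = 0" using indep[OF cK] by blast
    then show "set (take (length Us) Ks) \<subseteq> {\<zero>\<^bsub>FR\<^esub>}"
      using lUs by (auto simp: c_def set_conv_nth)
  qed
  obtain Vs where Vs: "F.independent K Vs" "F.Span K Vs = F.Span K ws" "length Vs \<le> length ws"
    using F.filter_base_len[OF K, of ws] by auto
  have "set Us \<subseteq> F.Span K Vs" using inspan Vs(2) Usi lUs by (auto simp: set_conv_nth)
  then have "length Us \<le> length Vs" using F.independent_length_le[OF K indUs Vs(1)] by blast
  then show ?thesis using lUs Vs(3) by simp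
qed


definition amon :: "'l set \<Rightarrow> ('l \<Rightarrow> nat) \<Rightarrow> 'l::field" where
  "amon A k = (\<Prod>a\<in>A. a ^ k a)"

definition MonT :: "'l::field set \<Rightarrow> nat \<Rightarrow> 'l set" where
  "MonT A T = amon A ` (PiE A (\<lambda>_. {..T}))"

inductive_set Pol :: "'l::field set \<Rightarrow> 'l set \<Rightarrow> nat \<Rightarrow> 'l set" for K A T where
  Pol0: "0 \<in> Pol K A T"
| PolS: "c \<in> K \<Longrightarrow> m \<in> MonT A T \<Longrightarrow> P \<in> Pol K A T \<Longrightarrow> c * m + P \<in> Pol K A T"

lemma MonT_mono: "T \<le> T' \<Longrightarrow> MonT A T \<subseteq> MonT A T'"
  unfolding MonT_def by (intro image_mono PiE_mono) auto

lemma MonT_mult: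
  assumes "m \<in> MonT A T" "m' \<in> MonT A T'"
  shows "m * m' \<in> MonT A (T + T')"
proof -
  obtain k where k: "k \<in> PiE A (\<lambda>_. {..T})" "m = amon A k" using assms(1) unfolding MonT_def by blast
  obtain k' where k': "k' \<in> PiE A (\<lambda>_. {..T'})" "m' = amon A k'" using assms(2) unfolding MonT_def by blast
  define k'' where "k'' = restrict (\<lambda>a. k a + k' a) A"
  have "k'' \<in> PiE A (\<lambda>_. {..T + T'})" unfolding k''_def using k(1) k'(1) by (auto simp: PiE_iff add_mono)
  moreover have "amon A k'' = m * m'"
    unfolding k(2) k'(2) amon_def k''_def by (simp add: power_add prod.distrib)
  ultimately show ?thesis unfolding MonT_def by (metis image_eqI)
qed

lemma MonT_1: "1 \<in> MonT A T"
proof -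
  have "restrict (\<lambda>_. 0) A \<in> PiE A (\<lambda>_. {..T})" by auto
  moreover have "amon A (restrict (\<lambda>_. 0) A) = 1" unfolding amon_def by simp
  ultimately show ?thesis unfolding MonT_def by (metis image_eqI)
qed

lemma MonT_a:
  assumes A: "finite A" and a: "a \<in> A" and T: "1 \<le> T"
  shows "a \<in> MonT A T"
proof -
  define k where "k = restrict (\<lambda>b. if b = a then 1 else 0::nat) A"
  have "k \<in> PiE A (\<lambda>_. {..T})" unfolding k_def using T by auto
  moreover have "amon A k = a"
  proof -
    have "amon A k = (\<Prod>b\<in>A. if b = a then b else 1)"
      unfolding amon_def k_def by (intro prod.cong) auto
    also have "\<dots> = a" using A a by simp
    finally show ?thesis .
  qed
  ultimately show ?thesis unfolding MonT_def by (metis image_eqI)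
qed

lemma MonT_finite: "finite A \<Longrightarrow> finite (MonT A T)"
  unfolding MonT_def by (intro finite_imageI finite_PiE) auto

lemma MonT_card: "finite A \<Longrightarrow> card (MonT A T) \<le> (T + 1) ^ card A"
proof -
  assume A: "finite A"
  have "card (MonT A T) \<le> card (PiE A (\<lambda>_. {..T}))" unfolding MonT_def
    by (rule card_image_le) (use A in \<open>intro finite_PiE, auto\<close>)
  also have "\<dots> = (T + 1) ^ card A" using A by (simp add: card_PiE)
  finally show ?thesis .
qed

context fixes K :: "'l::field set" assumes sK: "is_subfield K"
begin

lemma Pol_mono: "P \<in> Pol K A T \<Longrightarrow> T \<le> T' \<Longrightarrow> P \<in> Pol K A T'"
proof (induction rule: Pol.induct)
  case Pol0 show ?case by (rule Pol.Pol0)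
next
  case (PolS c m P) then show ?case using MonT_mono[OF PolS(5)] by (auto intro: Pol.PolS)
qed

lemma Pol_add: "P \<in> Pol K A T \<Longrightarrow> P' \<in> Pol K A T \<Longrightarrow> P + P' \<in> Pol K A T"
proof (induction rule: Pol.induct)
  case Pol0 then show ?case by simp
next
  case (PolS c m P)
  then have "c * m + (P + P') \<in> Pol K A T" by (intro Pol.PolS) auto
  then show ?case by (simp add: add.assoc)
qed

lemma Pol_smult: "P \<in> Pol K A T \<Longrightarrow> c \<in> K \<Longrightarrow> c * P \<in> Pol K A T"
proof (induction rule: Pol.induct)
  case Pol0 then show ?case by (simp add: Pol.Pol0)
next
  case (PolS c' m P)
  then have "(c * c') * m + c * P \<in> Pol K A T" by (intro Pol.PolS) (auto simp: sf_mult[OF sK])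
  then show ?case by (simp add: algebra_simps)
qed

lemma Pol_uminus: "P \<in> Pol K A T \<Longrightarrow> - P \<in> Pol K A T"
  using Pol_smult[of P A T "-1"] sf_uminus[OF sK sf_1[OF sK]] by simp

lemma Pol_1: "1 \<in> Pol K A T"
  using Pol.PolS[OF sf_1[OF sK] MonT_1 Pol.Pol0] by simp

lemma Pol_K: "c \<in> K \<Longrightarrow> c \<in> Pol K A T"
  using Pol.PolS[OF _ MonT_1 Pol.Pol0] by fastforce

lemma Pol_A: "finite A \<Longrightarrow> a \<in> A \<Longrightarrow> 1 \<le> T \<Longrightarrow> a \<in> Pol K A T"
  using Pol.PolS[OF sf_1[OF sK] MonT_a Pol.Pol0] by fastforce

lemma Pol_monmult: "P' \<in> Pol K A T' \<Longrightarrow> m \<in> MonT A T \<Longrightarrow> m * P' \<in> Pol K A (T + T')"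
proof (induction rule: Pol.induct)
  case Pol0 then show ?case by (simp add: Pol.Pol0)
next
  case (PolS c m' P)
  have "m * m' \<in> MonT A (T + T')" by (rule MonT_mult[OF PolS(5) PolS(2)])
  then have "c * (m * m') + m * P \<in> Pol K A (T + T')" using PolS by (intro Pol.PolS) auto
  then show ?case by (simp add: algebra_simps)
qed

lemma Pol_mult: "P \<in> Pol K A T \<Longrightarrow> P' \<in> Pol K A T' \<Longrightarrow> P * P' \<in> Pol K A (T + T')"
proof (induction rule: Pol.induct)
  case Pol0 then show ?case by (simp add: Pol.Pol0)
next
  case (PolS c m P)
  have "c * (m * P') \<in> Pol K A (T + T')" using Pol_monmult[OF PolS(5) PolS(2)] PolS(1) by (rule Pol_smult)
  then have "c * (m * P') + P * P' \<in> Pol K A (T + T')" using PolS by (intro Pol_add) auto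
  then show ?case by (simp add: algebra_simps)
qed

lemma Pol_power: "P \<in> Pol K A T \<Longrightarrow> P ^ n \<in> Pol K A (n * T)"
proof (induction n)
  case 0 then show ?case by (simp add: Pol_1)
next
  case (Suc n)
  then have "P * P ^ n \<in> Pol K A (T + n * T)" by (intro Pol_mult) auto
  then show ?case by simp
qed

lemma Pol_prod: "(\<And>i. i < n \<Longrightarrow> f i \<in> Pol K A T) \<Longrightarrow> (\<Prod>i<n. f i) \<in> Pol K A (n * T)"
proof (induction n)
  case 0 then show ?case by (simp add: Pol_1)
next
  case (Suc n)
  then have "(\<Prod>i<n. f i) * f n \<in> Pol K A (n * T + T)" by (intro Pol_mult) auto
  then show ?case by (simp add: add.commute)
qed

lemma Pol_span:
  assumes "set ws = MonT A T"
  shows "Pol K A T \<subseteq> ring.Span FR K ws"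
proof
  interpret F: field "FR :: 'l ring" by (rule field_FR)
  have Kf: "subfield K FR" by (rule subfield_FR[OF sK])
  have ws: "set ws \<subseteq> carrier FR" by simp
  fix y assume "y \<in> Pol K A T"
  then show "y \<in> F.Span K ws"
  proof (induction rule: Pol.induct)
    case Pol0 then show ?case using F.Span_subgroup_props(2)[OF Kf ws] by simp
  next
    case (PolS c m P)
    have "m \<in> F.Span K ws" using F.Span_base_incl[OF Kf ws] PolS(2) assms by blast
    then have "c \<otimes>\<^bsub>FR\<^esub> m \<in> F.Span K ws" using F.Span_smult_closed[OF Kf ws] PolS(1) by blast
    then have "(c \<otimes>\<^bsub>FR\<^esub> m) \<oplus>\<^bsub>FR\<^esub> P \<in> F.Span K ws"
      using F.Span_subgroup_props(3)[OF Kf ws] PolS(4) by blast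
    then show ?case by simp
  qed
qed

definition RF :: "'l set \<Rightarrow> 'l set" where
  "RF A = {y. \<exists>T P Q. P \<in> Pol K A T \<and> Q \<in> Pol K A T \<and> Q \<noteq> 0 \<and> y = P / Q}"

lemma RF_I: "P \<in> Pol K A T \<Longrightarrow> Q \<in> Pol K A T \<Longrightarrow> Q \<noteq> 0 \<Longrightarrow> P / Q \<in> RF A"
  unfolding RF_def by blast

lemma RF_subfield: "is_subfield (RF A)"
  unfolding is_subfield_def
proof (intro conjI ballI)
  have "0 / 1 \<in> RF A" by (rule RF_I[of _ _ 0]) (auto intro: Pol.Pol0 Pol_1)
  then show "0 \<in> RF A" by simp
  show "1 \<in> RF A" using RF_I[of 1 A 0 1] Pol_1 by simp
  fix x assume "x \<in> RF A"
  then obtain T P Q where x: "P \<in> Pol K A T" "Q \<in> Pol K A T" "Q \<noteq> 0" "x = P / Q" unfolding RF_def by blast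
  show "- x \<in> RF A" using RF_I[OF Pol_uminus[OF x(1)] x(2,3)] x(4) by simp
  show "inverse x \<in> RF A"
  proof (cases "P = 0")
    case True
    have "0 / 1 \<in> RF A" by (rule RF_I[of _ _ 0]) (auto intro: Pol.Pol0 Pol_1)
    then show ?thesis using True x(4) by simp
  next
    case False then show ?thesis using RF_I[OF x(2) x(1) False] x(4) by simp
  qed
  fix y assume "y \<in> RF A"
  then obtain T' P' Q' where y: "P' \<in> Pol K A T'" "Q' \<in> Pol K A T'" "Q' \<noteq> 0" "y = P' / Q'" unfolding RF_def by blast
  define S where "S = T + T'"
  have x': "P \<in> Pol K A S" "Q \<in> Pol K A S" using x Pol_mono unfolding S_def by auto
  have y': "P' \<in> Pol K A S" "Q' \<in> Pol K A S" using y Pol_mono unfolding S_def by auto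
  have QQ: "Q * Q' \<in> Pol K A (S + S)" "Q * Q' \<noteq> 0" using Pol_mult x' y' x(3) y(3) by auto
  have "P * Q' + P' * Q \<in> Pol K A (S + S)" using Pol_mult Pol_add x' y' by blast
  moreover have "x + y = (P * Q' + P' * Q) / (Q * Q')" using x y by (simp add: field_simps)
  ultimately show "x + y \<in> RF A" using RF_I QQ by metis
  have "P * P' \<in> Pol K A (S + S)" using Pol_mult x' y' by blast
  moreover have "x * y = (P * P') / (Q * Q')" using x y by simp
  ultimately show "x * y \<in> RF A" using RF_I QQ by metis
qed

lemma RF_incl: "finite A \<Longrightarrow> K \<union> A \<subseteq> RF A"
proof
  fix y assume A: "finite A" and yKA: "y \<in> K \<union> A"
  from yKA show "y \<in> RF A"
  proof
    assume "y \<in> K" then show ?thesis using RF_I[of y A 0 1] Pol_K Pol_1 by simp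
  next
    assume "y \<in> A" then show ?thesis using RF_I[of y A 1 1] Pol_A[OF A, of y 1] Pol_1 by simp
  qed
qed

lemma common_denom_pol:
  fixes x :: "nat \<Rightarrow> 'l"
  assumes "\<forall>i<l. x i \<in> RF A"
  shows "\<exists>T Q P. Q \<in> Pol K A T \<and> Q \<noteq> 0 \<and> (\<forall>i<l. P i \<in> Pol K A T \<and> x i = P i / Q)"
  using assms
proof (induction l)
  case 0 then show ?case using Pol_1 by fastforce
next
  case (Suc l)
  then obtain T Q P where TQP: "Q \<in> Pol K A T" "Q \<noteq> 0" "\<forall>i<l. P i \<in> Pol K A T \<and> x i = P i / Q" by auto
  obtain T' P' Q' where y: "P' \<in> Pol K A T'" "Q' \<in> Pol K A T'" "Q' \<noteq> 0" "x l = P' / Q'"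
    using Suc.prems unfolding RF_def by blast
  define S where "S = T + T'"
  have Q1: "Q \<in> Pol K A S" using TQP Pol_mono unfolding S_def by auto
  have y': "P' \<in> Pol K A S" "Q' \<in> Pol K A S" using y Pol_mono unfolding S_def by auto
  define P'' where "P'' = (\<lambda>i. if i < l then P i * Q' else P' * Q)"
  have "Q * Q' \<in> Pol K A (S + S)" "Q * Q' \<noteq> 0" using Pol_mult Q1 y' TQP y by auto
  moreover have "\<forall>i<Suc l. P'' i \<in> Pol K A (S + S) \<and> x i = P'' i / (Q * Q')"
  proof (intro allI impI)
    fix i assume i: "i < Suc l"
    show "P'' i \<in> Pol K A (S + S) \<and> x i = P'' i / (Q * Q')"
    proof (cases "i < l")
      case True
      have "P i \<in> Pol K A S" using TQP True Pol_mono unfolding S_def by auto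
      then show ?thesis using True TQP y Pol_mult[of "P i" A S Q' S] y' by (simp add: P''_def)
    next
      case False then have "i = l" using i by simp
      then show ?thesis using TQP y Pol_mult[OF y'(1) Q1] by (simp add: P''_def)
    qed
  qed
  ultimately show ?case by blast
qed

end


lemma arith_contra:
  fixes l d T :: nat
  assumes ld: "d < l"
  defines "C \<equiv> l * T + 1"
  defines "N \<equiv> C ^ d"
  shows "\<not> (N + 1) ^ l \<le> (l * (N * T) + 1) ^ d"
proof
  assume H: "(N + 1) ^ l \<le> (l * (N * T) + 1) ^ d"
  have "l * (N * T) + 1 \<le> C * (N + 1)" unfolding C_def by (simp add: algebra_simps)
  then have "(l * (N * T) + 1) ^ d \<le> (C * (N + 1)) ^ d" by (rule power_mono) simp
  also have "\<dots> = N * (N + 1) ^ d" by (simp only: power_mult_distrib N_def)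
  also have "\<dots> < (N + 1) * (N + 1) ^ d" by simp
  also have "\<dots> = (N + 1) ^ Suc d" by simp
  also have "\<dots> \<le> (N + 1) ^ l" using ld by (intro power_increasing) auto
  finally show False using H by simp
qed

lemma fam_bound:
  fixes v :: "'l::field \<Rightarrow> real" and p :: nat and x :: "nat \<Rightarrow> 'l"
  assumes pp: "prime p" and cp: "of_nat p = (0::'l)" and nv: "nonarch_abs v"
    and sK: "is_subfield K" and A: "finite A"
    and xF: "\<forall>i<l. x i \<in> gen_subfield (K \<union> A)"
    and g: "gauss_norm_cond p v K l r x" and r: "\<forall>i<l. 0 < r i"
  shows "l \<le> card A"
proof (rule ccontr)
  assume "\<not> l \<le> card A"
  then have ld: "card A < l" by simp
  define d where "d = card A"
  have "gen_subfield (K \<union> A) \<subseteq> RF K A"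
    by (rule gen_subfield_min[OF RF_subfield[OF sK] RF_incl[OF sK A]])
  then have xRF: "\<forall>i<l. x i \<in> RF K A" using xF by blast
  obtain T Q P where Q: "Q \<in> Pol K A T" "Q \<noteq> 0" and P: "\<forall>i<l. P i \<in> Pol K A T \<and> x i = P i / Q"
    using common_denom_pol[OF sK xRF] by blast
  define C where "C = l * T + 1"
  define N where "N = C ^ d"
  define T' where "T' = l * (N * T)"
  define B where "B = PiE {..<l} (\<lambda>_. {..N})"
  have Bfin: "finite B" unfolding B_def by (intro finite_PiE) auto
  have Bcard: "card B = (N + 1) ^ l" unfolding B_def by (simp add: card_PiE)
  obtain ks where ks: "set ks = B" "distinct ks" using finite_distinct_list[OF Bfin] by blast
  have lks: "length ks = (N + 1) ^ l" using ks Bcard distinct_card by metis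
  obtain ws where ws: "set ws = MonT A T'" "distinct ws" using finite_distinct_list[OF MonT_finite[OF A]] by blast
  have lws: "length ws \<le> (T' + 1) ^ d" using ws MonT_card[OF A, of T'] distinct_card unfolding d_def by metis
  define ek where "ek = (\<lambda>k::nat \<Rightarrow> nat. (\<lambda>i. if i < l then (of_nat (k i) :: rat) else 0))"
  have ek_adm: "admissible_exp p l (ek k)" for k
    unfolding admissible_exp_def ek_def by (auto intro: exI[of _ 0])
  have ek_inj: "inj_on ek B"
  proof (rule inj_onI)
    fix k k' assume kB: "k \<in> B" "k' \<in> B" and e: "ek k = ek k'"
    show "k = k'"
    proof (rule PiE_ext[OF kB[unfolded B_def]])
      fix i assume "i \<in> {..<l}"
      then show "k i = k' i" using fun_cong[OF e, of i] unfolding ek_def by simp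
    qed
  qed
  have mon_ek: "Defs.mon p l x (ek k) = (\<Prod>i<l. x i ^ k i)" for k
    unfolding Defs.mon_def root_pow_rho ek_def
    by (intro prod.cong refl) (simp add: rho_nat[OF pp cp])
  define u where "u = (\<lambda>j. Defs.mon p l x (ek (ks ! j)) * Q ^ (l * N))"
  have uPol: "u j \<in> Pol K A T'" if j: "j < length ks" for j
  proof -
    define k where "k = ks ! j"
    have kB: "k \<in> B" unfolding k_def using j ks nth_mem by blast
    have kN: "k i \<le> N" if "i < l" for i using kB that unfolding B_def by auto
    have "u j = (\<Prod>i<l. x i ^ k i * Q ^ N)"
      unfolding u_def k_def[symmetric] mon_ek prod.distrib by (simp add: power_mult mult.commute)
    also have "\<dots> = (\<Prod>i<l. P i ^ k i * Q ^ (N - k i))"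
    proof (intro prod.cong refl)
      fix i assume "i \<in> {..<l}"
      then have i: "i < l" by simp
      have "Q ^ N = Q ^ k i * Q ^ (N - k i)" using kN[OF i] by (simp add: power_add[symmetric])
      then show "x i ^ k i * Q ^ N = P i ^ k i * Q ^ (N - k i)"
        using P i Q(2) by (simp add: power_divide)
    qed
    also have "\<dots> \<in> Pol K A (l * (N * T))"
    proof (rule Pol_prod[OF sK])
      fix i assume i: "i < l"
      have "P i ^ k i * Q ^ (N - k i) \<in> Pol K A (k i * T + (N - k i) * T)"
        using P i Q by (intro Pol_mult[OF sK] Pol_power[OF sK]) auto
      moreover have "k i * T + (N - k i) * T = N * T" using kN[OF i] by (simp add: add_mult_distrib[symmetric])
      ultimately show "P i ^ k i * Q ^ (N - k i) \<in> Pol K A (N * T)" by simp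
    qed
    finally show ?thesis unfolding T'_def .
  qed
  have "length ks \<le> length ws"
  proof (rule lin_bound[OF sK])
    show "\<forall>i<length ks. u i \<in> ring.Span FR K ws"
      using uPol Pol_span[OF sK ws(1)] by blast
    fix c assume cK: "\<forall>i<length ks. c i \<in> K" and s0: "(\<Sum>i<length ks. c i * u i) = 0"
    have "(\<Sum>i<length ks. c i * u i) = (\<Sum>i<length ks. c i * Defs.mon p l x (ek (ks ! i))) * Q ^ (l * N)"
      unfolding u_def by (simp add: sum_distrib_right mult.assoc)
    then have s1: "(\<Sum>i<length ks. c i * Defs.mon p l x (ek (ks ! i))) = 0" using s0 Q(2) by simp
    have "0 < length ks" using lks by simp
    then have ne: "{..<length ks} \<noteq> {}" by auto
    have inj: "inj_on (\<lambda>i. ek (ks ! i)) {..<length ks}"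
    proof (rule inj_onI)
      fix i j assume "i \<in> {..<length ks}" "j \<in> {..<length ks}" "ek (ks ! i) = ek (ks ! j)"
      moreover have "ks ! i \<in> B" "ks ! j \<in> B" using ks calculation(1,2) by auto
      ultimately have "ks ! i = ks ! j" using ek_inj by (meson inj_on_def)
      then show "i = j" using ks(2) \<open>i \<in> {..<length ks}\<close> \<open>j \<in> {..<length ks}\<close> by (simp add: nth_eq_iff_index_eq)
    qed
    have "v (\<Sum>i<length ks. c i * Defs.mon p l x (ek (ks ! i)))
        = Max ((\<lambda>i. v (c i) * GR l r (ek (ks ! i))) ` {..<length ks})"
      by (rule gauss_flex[OF g _ ne inj]) (use ek_adm cK in auto)
    then have M0: "Max ((\<lambda>i. v (c i) * GR l r (ek (ks ! i))) ` {..<length ks}) = 0"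
      using s1 by (simp add: va_0[OF nv])
    show "\<forall>i<length ks. c i = 0"
    proof (intro allI impI)
      fix i assume i: "i < length ks"
      have "v (c i) * GR l r (ek (ks ! i)) \<le> 0"
        using M0 i by (metis (no_types, lifting) Max_ge finite_imageI finite_lessThan image_eqI lessThan_iff)
      moreover have "0 < GR l r (ek (ks ! i))" using r by (intro GR_pos) auto
      ultimately have "v (c i) \<le> 0" by (simp add: mult_le_0_iff)
      then show "c i = 0" using va_nonneg[OF nv, of "c i"] va_zero_iff[OF nv] by force
    qed
  qed
  then have "(N + 1) ^ l \<le> (l * (N * T) + 1) ^ d" using lks lws unfolding T'_def by simp
  then show False using arith_contra[OF ld[folded d_def], of T] unfolding N_def C_def by simp
qed


lemma pow_diff_small:
  fixes v :: "'l::field \<Rightarrow> real"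
  assumes nv: "nonarch_abs v" and y: "v y \<le> 1" and z: "v z \<le> 1" and yz: "v (y - z) < 1"
  shows "v (y ^ k - z ^ k) < 1"
proof (induction k)
  case 0 then show ?case by (simp add: va_0[OF nv])
next
  case (Suc k)
  have eq: "y ^ Suc k - z ^ Suc k = y * (y ^ k - z ^ k) + (y - z) * z ^ k" by (simp add: algebra_simps)
  have 1: "v (y * (y ^ k - z ^ k)) < 1"
  proof -
    have "v (y * (y ^ k - z ^ k)) = v y * v (y ^ k - z ^ k)" by (rule va_mult[OF nv])
    also have "\<dots> \<le> v (y ^ k - z ^ k)"
      by (intro mult_left_le_one_le) (simp_all add: va_nonneg[OF nv] y)
    finally show ?thesis using Suc by linarith
  qed
  have 2: "v ((y - z) * z ^ k) < 1"
  proof -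
    have "v ((y - z) * z ^ k) = v (y - z) * v z ^ k" by (simp add: va_mult[OF nv] va_power[OF nv])
    also have "\<dots> \<le> v (y - z)" using z va_nonneg[OF nv, of z] va_nonneg[OF nv, of "y - z"]
      by (simp add: mult_right_le_one_le power_le_one)
    finally show ?thesis using yz by linarith
  qed
  show ?case unfolding eq by (rule va_add_less[OF nv 1 2])
qed

lemma reindex_pow:
  fixes a :: "nat \<Rightarrow> 'l::field"
  assumes P: "0 < P"
  shows "(\<Sum>j<P * m. (if P dvd j then a (j div P) else 0) * z ^ j) = (\<Sum>i<m. a i * (z ^ P) ^ i)"
proof -
  have sub: "(\<lambda>i. P * i) ` {..<m} \<subseteq> {..<P * m}" using P by auto
  have "(\<Sum>j<P * m. (if P dvd j then a (j div P) else 0) * z ^ j)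
      = (\<Sum>j\<in>(\<lambda>i. P * i) ` {..<m}. (if P dvd j then a (j div P) else 0) * z ^ j)"
  proof (rule sum.mono_neutral_right)
    show "finite {..<P * m}" by simp
    show "(\<lambda>i. P * i) ` {..<m} \<subseteq> {..<P * m}" by (rule sub)
    show "\<forall>j\<in>{..<P * m} - (\<lambda>i. P * i) ` {..<m}. (if P dvd j then a (j div P) else 0) * z ^ j = 0"
    proof
      fix j assume j: "j \<in> {..<P * m} - (\<lambda>i. P * i) ` {..<m}"
      show "(if P dvd j then a (j div P) else 0) * z ^ j = 0"
      proof (cases "P dvd j")
        case True
        then obtain i where i: "j = P * i" by blast
        then have "i < m" using j P by auto
        then show ?thesis using j i by auto
      qed simp
    qed
  qed
  also have "\<dots> = (\<Sum>i<m. (if P dvd (P * i) then a (P * i div P) else 0) * z ^ (P * i))"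
    using P by (subst sum.reindex) (auto simp: inj_on_def)
  also have "\<dots> = (\<Sum>i<m. a i * (z ^ P) ^ i)" using P by (simp add: power_mult)
  finally show ?thesis .
qed

lemma closure_incl:
  fixes v :: "'l::field \<Rightarrow> real"
  assumes nv: "nonarch_abs v"
  shows "S \<subseteq> v_closure v S"
  unfolding v_closure_def using va_0[OF nv] by force

lemma perfect_roots:
  fixes E :: "'a::monoid_mult set"
  assumes perf: "\<forall>y\<in>E. \<exists>z\<in>E. z ^ p = y" and y: "y \<in> E"
  shows "\<exists>z\<in>E. z ^ (p ^ k) = y"
proof (induction k)
  case 0 then show ?case using y by (intro bexI[of _ y]) auto
next
  case (Suc k)
  then obtain z where z: "z \<in> E" "z ^ (p ^ k) = y" by blast
  then obtain w where w: "w \<in> E" "w ^ p = z" using perf by blast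
  have "w ^ (p ^ Suc k) = (w ^ p) ^ (p ^ k)" by (simp add: power_mult[symmetric] mult.commute)
  then show ?case using w z by auto
qed

theorem corollary3p9:
  fixes v :: "'l::field \<Rightarrow> real" and K :: "'l set" and p :: nat
  assumes "prime p"
    and "of_nat p = (0::'l)"
    and "nonarch_abs v"
    and "nonarch_field_in v UNIV"
    and "nonarch_field_in v K"
    and "perf_top_fin_gen p v K"
  shows "\<exists>l r M. is_Kperfd p v K l r M \<and> semi_immediate v M"
proof -
  note pp = assms(1) and cp = assms(2) and nv = assms(3)
  have sK: "is_subfield K" using assms(5) unfolding nonarch_field_in_def by blast
  obtain A where A: "finite A"
    and perf: "\<forall>y\<in>{y. \<exists>n. y ^ (p ^ n) \<in> gen_subfield (K \<union> A)}. \<exists>z\<in>{y. \<exists>n. y ^ (p ^ n) \<in> gen_subfield (K \<union> A)}. z ^ p = y"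
    and dense: "v_closure v {y. \<exists>n. y ^ (p ^ n) \<in> gen_subfield (K \<union> A)} = UNIV"
    using assms(6) unfolding perf_top_fin_gen_def Let_def by blast
  define F where "F = gen_subfield (K \<union> A)"
  define Eset where "Eset = {y. \<exists>n. y ^ (p ^ n) \<in> F}"
  have perfE: "\<forall>y\<in>Eset. \<exists>z\<in>Eset. z ^ p = y" using perf unfolding Eset_def F_def .
  have denseE: "v_closure v Eset = UNIV" using dense unfolding Eset_def F_def .
  have FE: "F \<subseteq> Eset" unfolding Eset_def by (auto intro: exI[of _ 0])
  have rootsF: "\<forall>k. \<exists>y. y ^ (p ^ k) = f" if "f \<in> F" for f
    using perfect_roots[OF perfE] FE that by blast
  define fam where "fam = (\<lambda>l r x. (\<forall>i<l. 0 < r i) \<and> (\<forall>i<l. x i \<in> F) \<and> has_p_roots p l x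
       \<and> gauss_norm_cond p v K l r x)"
  define Ls where "Ls = {l. \<exists>r x. fam l r x}"
  have Ls_bound: "l \<le> card A" if lL: "l \<in> Ls" for l
  proof -
    obtain r x where "fam l r x" using lL unfolding Ls_def by blast
    then show ?thesis unfolding fam_def F_def
      using fam_bound[OF pp cp nv sK A, of l x r] by blast
  qed
  have "fam 0 (\<lambda>_. 1) (\<lambda>_. 0)" unfolding fam_def has_p_roots_def using gauss_zero[OF nv] by simp
  then have L0: "0 \<in> Ls" unfolding Ls_def by blast
  have Lfin: "finite Ls" using Ls_bound by (meson finite_nat_set_iff_bounded_le)
  define lm where "lm = Max Ls"
  have "lm \<in> Ls" unfolding lm_def using Lfin L0 by (intro Max_in) auto
  then obtain r x where fm: "fam lm r x" unfolding Ls_def by blast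
  have no_ext: "\<not> fam (Suc lm) r' x'" for r' x'
  proof
    assume "fam (Suc lm) r' x'"
    then have "Suc lm \<in> Ls" unfolding Ls_def by blast
    then have "Suc lm \<le> lm" unfolding lm_def using Lfin by simp
    then show False by simp
  qed
  define S where "S = M0 p K lm x"
  define M where "M = v_closure v S"
  have SM: "S \<subseteq> M" unfolding M_def by (rule closure_incl[OF nv])
  have sfS: "is_subfield S" unfolding S_def by (rule M0_sub)
  have extend: "False" if fF: "f \<in> F" and f0: "f \<noteq> 0" and core: "core_prop v S f" for f
  proof -
    have "fam (Suc lm) (r(lm := v f)) (x(lm := f))"
      unfolding fam_def
    proof (intro conjI)
      show "\<forall>i<Suc lm. 0 < (r(lm := v f)) i"
        using fm va_pos[OF nv f0] unfolding fam_def by (auto simp: less_Suc_eq)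
      show "\<forall>i<Suc lm. (x(lm := f)) i \<in> F"
        using fm fF unfolding fam_def by (auto simp: less_Suc_eq)
      show "has_p_roots p (Suc lm) (x(lm := f))"
        using fm rootsF[OF fF] unfolding fam_def has_p_roots_def by (auto simp: less_Suc_eq)
      show "gauss_norm_cond p v K (Suc lm) (r(lm := v f)) (x(lm := f))"
        using gauss_extend[OF pp cp nv _ f0 rootsF[OF fF] core[unfolded S_def]] fm
        unfolding fam_def by blast
    qed
    then show False using no_ext by blast
  qed
  have Kp: "is_Kperfd p v K lm r M"
    using fm unfolding is_Kperfd_def fam_def M_def S_def M0_def by blast
  have approx: "\<exists>z\<in>Eset. v (y - z) < e" if "0 < e" for y e
    using denseE that unfolding v_closure_def by blast
  have val: "\<exists>n>0. \<exists>z\<in>M. z \<noteq> 0 \<and> v y ^ n = v z" if y0: "y \<noteq> 0" for y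
  proof -
    obtain z where z: "z \<in> Eset" "v (y - z) < v y" using approx va_pos[OF nv y0] by blast
    have vz: "v z = v y" using va_diff_small[OF nv z(2)] .
    have z0: "z \<noteq> 0" using vz va_pos[OF nv y0] by (auto simp: va_0[OF nv])
    obtain n where fF: "z ^ (p ^ n) \<in> F" using z unfolding Eset_def by blast
    define f where "f = z ^ (p ^ n)"
    have f0: "f \<noteq> 0" unfolding f_def using z0 by simp
    have vf: "v f = v y ^ (p ^ n)" unfolding f_def by (simp add: va_power[OF nv] vz)
    show ?thesis
    proof (rule ccontr)
      assume C: "\<not> ?thesis"
      have "\<forall>m>0. \<forall>w\<in>S. w \<noteq> 0 \<longrightarrow> v f ^ m \<noteq> v w"
      proof (intro allI impI ballI)
        fix m :: nat and w assume m: "0 < m" and w: "w \<in> S" "w \<noteq> 0"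
        show "v f ^ m \<noteq> v w"
        proof
          assume "v f ^ m = v w"
          then have "v y ^ (p ^ n * m) = v w" by (simp add: vf power_mult)
          moreover have "0 < p ^ n * m" using m pp by (simp add: prime_gt_0_nat)
          ultimately show False using C w SM by blast
        qed
      qed
      then have "core_prop v S f" by (rule core_value[OF nv sfS f0])
      then show False using extend[OF fF[folded f_def] f0] by blast
    qed
  qed
  have res: "\<exists>n>0. \<exists>a. (\<forall>j<n. a j \<in> M \<and> v (a j) \<le> 1) \<and> v (y ^ n + (\<Sum>j<n. a j * y ^ j)) < 1"
    if y1: "v y \<le> 1" for y
  proof (cases "v y < 1")
    case True
    have "0 \<in> M" using SM sf_0[OF sfS] by blast
    then show ?thesis using True
      by (intro exI[of _ 1] exI[of _ "\<lambda>_. 0"]) (auto simp: va_0[OF nv])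
  next
    case False
    then have vy: "v y = 1" using y1 by simp
    obtain z where z: "z \<in> Eset" "v (y - z) < 1" using approx[of 1] by auto
    have vz: "v z = 1" using va_diff_small[OF nv, of y z] z vy by simp
    obtain n where fF: "z ^ (p ^ n) \<in> F" using z unfolding Eset_def by blast
    define f where "f = z ^ (p ^ n)"
    have vf: "v f = 1" unfolding f_def by (simp add: va_power[OF nv] vz)
    have f0: "f \<noteq> 0" using vf by (auto simp: va_0[OF nv])
    show ?thesis
    proof (cases "\<exists>m>0. \<exists>a. (\<forall>j<m. a j \<in> M \<and> v (a j) \<le> 1) \<and> v (f ^ m + (\<Sum>j<m. a j * f ^ j)) < 1")
      case True
      then obtain m a where m: "0 < m" and a: "\<forall>j<m. a j \<in> M \<and> v (a j) \<le> 1"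
        and Pf: "v (f ^ m + (\<Sum>j<m. a j * f ^ j)) < 1" by blast
      define P where "P = p ^ n"
      have P0: "0 < P" unfolding P_def using pp by (simp add: prime_gt_0_nat)
      define a' where "a' = (\<lambda>j. if P dvd j then a (j div P) else 0)"
      define N where "N = P * m"
      have N0: "0 < N" unfolding N_def using P0 m by simp
      have a'M: "\<forall>j<N. a' j \<in> M \<and> v (a' j) \<le> 1"
      proof (intro allI impI)
        fix j assume j: "j < N"
        show "a' j \<in> M \<and> v (a' j) \<le> 1"
        proof (cases "P dvd j")
          case True
          have "j div P < m" using j P0 unfolding N_def by (simp add: div_less_iff_less_mult mult.commute)
          then show ?thesis using a True unfolding a'_def by simp
        next
          case False
          have "0 \<in> M" using SM sf_0[OF sfS] by blast
          then show ?thesis using False unfolding a'_def by (simp add: va_0[OF nv])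
        qed
      qed
      have Pz: "z ^ N + (\<Sum>j<N. a' j * z ^ j) = f ^ m + (\<Sum>j<m. a j * f ^ j)"
        unfolding a'_def N_def f_def P_def[symmetric]
        using reindex_pow[OF P0, where m=m and a=a and z=z] by (simp add: power_mult)
      have vyz: "v (y ^ k - z ^ k) < 1" for k
        using pow_diff_small[OF nv y1 _ z(2)] vz by simp
      have diff: "v ((y ^ N + (\<Sum>j<N. a' j * y ^ j)) - (z ^ N + (\<Sum>j<N. a' j * z ^ j))) < 1"
      proof -
        have eq: "(y ^ N + (\<Sum>j<N. a' j * y ^ j)) - (z ^ N + (\<Sum>j<N. a' j * z ^ j))
            = (y ^ N - z ^ N) + (\<Sum>j<N. a' j * (y ^ j - z ^ j))"
          by (simp add: algebra_simps sum_subtractf)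
        have "v (\<Sum>j<N. a' j * (y ^ j - z ^ j)) < 1"
        proof (rule va_sum_less[OF nv])
          fix j assume "j \<in> {..<N}"
          then have "v (a' j) \<le> 1" using a'M by simp
          then have "v (a' j) * v (y ^ j - z ^ j) \<le> v (y ^ j - z ^ j)"
            by (intro mult_left_le_one_le) (simp_all add: va_nonneg[OF nv])
          then show "v (a' j * (y ^ j - z ^ j)) < 1" using vyz[of j] by (simp add: va_mult[OF nv])
        qed simp
        then show ?thesis unfolding eq by (intro va_add_less[OF nv] vyz)
      qed
      have "v (y ^ N + (\<Sum>j<N. a' j * y ^ j)) < 1"
      proof -
        let ?Y = "y ^ N + (\<Sum>j<N. a' j * y ^ j)" and ?Z = "z ^ N + (\<Sum>j<N. a' j * z ^ j)"
        have "?Y = ?Z + (?Y - ?Z)" by simp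
        moreover have "v ?Z < 1" using Pz Pf by simp
        ultimately show ?thesis using va_add_less[OF nv _ diff] by metis
      qed
      then show ?thesis using N0 a'M by blast
    next
      case False
      have "\<forall>m>0. \<forall>a. (\<forall>j<m. a j \<in> S \<and> v (a j) \<le> 1) \<longrightarrow> \<not> v (f ^ m + (\<Sum>j<m. a j * f ^ j)) < 1"
        using False SM by blast
      then have "core_prop v S f" by (rule core_resid[OF nv sfS vf])
      then show ?thesis using extend[OF fF[folded f_def] f0] by blast
    qed
  qed
  have "semi_immediate v M" unfolding semi_immediate_def using val res by blast
  then show ?thesis using Kp by blast
qed


end
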